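(* Let $\alpha,\beta\in(0,1)$ with $\alpha(1+\beta)>1$, let $V,W$ be separable Banach spaces with $W$ compactly embedded in $V$, and let $A\in C^{\alpha}_t C^{\beta}_{V,W}$. Then for any $s\in[0,T)$ and any $x_s\in V$ there exists a solution to the YDE \[ x_t = x_s + \int_s^t A(\mathrm{d} r, x_r)\qquad \forall\, t\in[s,T], \] i.e. a path $x\in C^{\gamma}([s,T];V)$ for some $\gamma$ with $\alpha+\beta\gamma>1$ satisfying this identity (the integral takes values in $W\subset V$).
   Context: Fix $T>0$. For a path $f:[0,T]\to E$ ($E$ a Banach space) write $f_{s,t}:=f_t-f_s$, $\llbracket f\rrbracket_{\gamma}:=\sup_{0\le s<t\le T}\|f_{s,t}\|_E/|t-s|^{\gamma}$, $\|f\|_\infty=\sup_t\|f_t\|_E$, $\|f\|_\gamma=\|f\|_\infty+\llbracket f\rrbracket_\gamma$, and $C^\gamma_tE$ (or $C^\gamma([s,t];E)$ on a subinterval) is the space of paths with finite $\|\cdot\|_\gamma$. For $g:V\to W$ and $\beta\in(0,1)$ let $\llbracket g\rrbracket_\beta=\sup_{x\neq y}\|g(x)-g(y)\|_W/\|x-y\|_V^\beta$ and $\|g\|_\beta=\llbracket g\rrbracket_\beta+\sup_x\|g(x)\|_W$. All fields $A:[0,T]\times V\to W$ satisfy $A(0,\cdot)=0$ and we write $A_{s,t}(x):=A(t,x)-A(s,x)$. $A\in C^\alpha_tC^\beta_{V,W}$ means $\|A\|_{\alpha,\beta}:=\sup_{0\le s<t\le T}\|A_{s,t}\|_\beta/|t-s|^\alpha<\infty$.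 For such $A$ and $x\in C^\gamma_tV$ with $\alpha+\beta\gamma>1$, the nonlinear Young integral is $\int_s^tA(\mathrm{d} r,x_r):=\lim_{|\Pi|\to0}\sum_iA_{t_i,t_{i+1}}(x_{t_i})$, the limit over partitions $\Pi=\{t_i\}$ of $[s,t]$ with mesh $|\Pi|\to0$; it exists and does not depend on the chosen partitions. *)

theory Defs
  imports "HOL-Analysis.Analysis"
begin

definition separable_type :: "'a::metric_space itself \<Rightarrow> bool" where
  "separable_type _ \<longleftrightarrow> (\<exists>D::'a set. countable D \<and> closure D = UNIV)"

definition compact_embedding :: "('w::real_normed_vector \<Rightarrow> 'v::real_normed_vector) \<Rightarrow> bool" where
  "compact_embedding \<iota> \<longleftrightarrow> bounded_linear \<iota> \<and> inj \<iota> \<and> compact (closure (\<iota> ` ball 0 1))"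

definition holder_field ::
  "real \<Rightarrow> real \<Rightarrow> real \<Rightarrow> (real \<Rightarrow> 'v::real_normed_vector \<Rightarrow> 'w::real_normed_vector) \<Rightarrow> bool" where
  "holder_field T \<alpha> \<beta> A \<longleftrightarrow> (\<forall>x. A 0 x = 0) \<and>
     (\<exists>C. \<forall>s\<in>{0..T}. \<forall>t\<in>{0..T}. s < t \<longrightarrow>
        (SUP x. norm (A t x - A s x)) + (SUP p\<in>{(x,y). x \<noteq> y}. norm ((A t (fst p) - A s (fst p)) - (A t (snd p) - A s (snd p))) / norm (fst p - snd p) powr \<beta>)
          \<le> C * (t - s) powr \<alpha>
        \<and> bdd_above (range (\<lambda>x. norm (A t x - A s x)))
        \<and> bdd_above ((\<lambda>(x,y). norm ((A t x - A s x) - (A t y - A s y)) / norm (x - y) powr \<beta>) ` {(x,y). x \<noteq> y}))"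

definition is_partition :: "real list \<Rightarrow> real \<Rightarrow> real \<Rightarrow> bool" where
  "is_partition P s t \<longleftrightarrow> P \<noteq> [] \<and> sorted_wrt (<) P \<and> hd P = s \<and> last P = t"

definition mesh :: "real list \<Rightarrow> real" where
  "mesh P = foldr max (map (\<lambda>(a,b). b - a) (zip P (tl P))) 0"

definition young_sum ::
  "(real \<Rightarrow> 'v \<Rightarrow> 'w::real_normed_vector) \<Rightarrow> (real \<Rightarrow> 'v) \<Rightarrow> real list \<Rightarrow> 'w" where
  "young_sum A x P = sum_list (map (\<lambda>(a,b). A b (x a) - A a (x a)) (zip P (tl P)))"

definition has_young_integral ::
  "(real \<Rightarrow> 'v \<Rightarrow> 'w::real_normed_vector) \<Rightarrow> (real \<Rightarrow> 'v) \<Rightarrow> real \<Rightarrow> real \<Rightarrow> 'w \<Rightarrow> bool" where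
  "has_young_integral A x s t I \<longleftrightarrow>
     (\<forall>\<epsilon>>0. \<exists>\<delta>>0. \<forall>P. is_partition P s t \<and> mesh P < \<delta> \<longrightarrow> norm (young_sum A x P - I) < \<epsilon>)"

definition holder_path :: "real \<Rightarrow> real \<Rightarrow> real \<Rightarrow> (real \<Rightarrow> 'v::real_normed_vector) \<Rightarrow> bool" where
  "holder_path \<gamma> s T x \<longleftrightarrow> (\<exists>C. \<forall>u\<in>{s..T}. \<forall>v\<in>{s..T}.
      norm (x u) \<le> C \<and> norm (x v - x u) \<le> C * \<bar>v - u\<bar> powr \<gamma>)"

end

theory Submission
  imports Defs
begin

definition gs :: "(real \<Rightarrow> real \<Rightarrow> 'a::real_normed_vector) \<Rightarrow> real list \<Rightarrow> 'a" where
  "gs \<Xi> P = sum_list (map (\<lambda>(a,b). \<Xi> a b) (zip P (tl P)))"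

lemma gs_Nil[simp]: "gs \<Xi> [] = 0" by (simp add: gs_def)
lemma gs_single[simp]: "gs \<Xi> [a] = 0" by (simp add: gs_def)
lemma gs_Cons2[simp]: "gs \<Xi> (a # b # P) = \<Xi> a b + gs \<Xi> (b # P)" by (simp add: gs_def)

lemma gs_append: "gs \<Xi> (L @ m # R) = gs \<Xi> (L @ [m]) + gs \<Xi> (m # R)"
proof (induction L)
  case Nil then show ?case by simp
next
  case (Cons a L)
  then show ?case by (cases L) (auto simp: algebra_simps)
qed

lemma gs_snoc: "gs \<Xi> (L @ [m, p]) = gs \<Xi> (L @ [m]) + \<Xi> m p"
  using gs_append[of \<Xi> L m "[p]"] by simp

lemma gs_telescope: "P \<noteq> [] \<Longrightarrow> gs (\<lambda>a b. f b - f a) P = f (last P) - f (hd P)"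
proof (induction P rule: induct_list012)
  case (3 a b P) then show ?case by simp
qed auto

lemma young_sum_gs: "young_sum A x P = gs (\<lambda>a b. A b (x a) - A a (x a)) P"
  by (simp add: young_sum_def gs_def)

lemma gs_linear: assumes "bounded_linear f" shows "f (gs \<Xi> P) = gs (\<lambda>a b. f (\<Xi> a b)) P"
proof (induction P rule: induct_list012)
  case 1 then show ?case using bounded_linear.linear[OF assms] linear_0 by simp
next
  case (2 x) then show ?case using bounded_linear.linear[OF assms] linear_0 by simp
next
  case (3 a b P) then show ?case using bounded_linear.linear[OF assms] by (simp add: linear_add)
qed

lemma gs_norm_le: "norm (gs \<Xi> P) \<le> gs (\<lambda>a b. norm (\<Xi> a b)) P"
proof (induction P rule: induct_list012)
  case (3 a b P) then show ?case by simp (meson norm_triangle_le add_left_mono)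
qed auto

lemma gs_mono: "(\<And>a b. (a,b) \<in> set (zip P (tl P)) \<Longrightarrow> f a b \<le> g a b) \<Longrightarrow> gs f P \<le> (gs g P::real)"
proof (induction P rule: induct_list012)
  case (3 a b P)
  have "f a b \<le> g a b" using 3(3) by simp
  moreover have "gs f (b # P) \<le> gs g (b # P)" using 3(2,3) by simp
  ultimately show ?case by simp
qed auto

lemma sorted_le_last: "sorted_wrt (<) P \<Longrightarrow> x \<in> set P \<Longrightarrow> x \<le> (last P::real)"
proof (induction P)
  case (Cons a t)
  show ?case
  proof (cases "t = []")
    case True then show ?thesis using Cons by simp
  next
    case False
    have "last t \<in> set t" using False by simp
    then have "a < last t" using Cons(2) by simp
    show ?thesis using Cons False \<open>a < last t\<close> by (cases "x=a") (auto simp: less_imp_le)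
  qed
qed simp

lemma sorted_bounds: "sorted_wrt (<) P \<Longrightarrow> P \<noteq> [] \<Longrightarrow> x \<in> set P \<Longrightarrow> hd P \<le> x \<and> x \<le> (last P::real)"
  using sorted_le_last[of P x] by (cases P) auto

lemma sorted_hd_last: "sorted_wrt (<) P \<Longrightarrow> length P \<ge> 2 \<Longrightarrow> hd P < (last P::real)"
proof (cases P)
  case (Cons a t)
  assume s: "sorted_wrt (<) P" and l: "length P \<ge> 2"
  then have "t \<noteq> []" using Cons by auto
  then have "last t \<in> set t" by simp
  then show ?thesis using s Cons \<open>t \<noteq> []\<close> by simp
qed simp

lemma sorted_hd_eq_last: "sorted_wrt (<) P \<Longrightarrow> P \<noteq> [] \<Longrightarrow> hd P = (last P::real) \<Longrightarrow> P = [hd P]"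
proof -
  assume a: "sorted_wrt (<) P" "P \<noteq> []" "hd P = last P"
  have "\<not> length P \<ge> 2" using sorted_hd_last[OF a(1)] a(3) by auto
  then show ?thesis using a(2) by (cases P; cases "tl P") auto
qed

lemma foldr_max_ge: "x \<in> set xs \<Longrightarrow> x \<le> foldr max xs (0::real)"
  by (induction xs) auto

lemma foldr_max_nonneg: "0 \<le> foldr max xs (0::real)"
  by (induction xs) auto

lemma foldr_max_le: "(\<forall>x\<in>set xs. x \<le> h) \<Longrightarrow> 0 \<le> h \<Longrightarrow> foldr max xs (0::real) \<le> h"
  by (induction xs) auto

lemma mesh_ge: "(a,b) \<in> set (zip P (tl P)) \<Longrightarrow> b - a \<le> mesh P"
  unfolding mesh_def by (rule foldr_max_ge) force

lemma mesh_nonneg: "0 \<le> mesh P" unfolding mesh_def by (rule foldr_max_nonneg)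

lemma zip_tl_sorted: "sorted_wrt (<) P \<Longrightarrow> (a,b) \<in> set (zip P (tl P)) \<Longrightarrow> (a::real) < b"
proof (induction P rule: induct_list012)
  case (3 x y P) then show ?case by auto
qed auto

lemma zip_tl_in: "(a,b) \<in> set (zip P (tl P)) \<Longrightarrow> a \<in> set P \<and> b \<in> set P"
  by (cases P) (auto dest: set_zip_leftD set_zip_rightD)


lemma norm4: "norm (p + q - r - t) \<le> norm p + norm q + norm r + norm (t::'a::real_normed_vector)"
proof -
  have "norm (p + q - r - t) \<le> norm (p + q - r) + norm t" by (rule norm_triangle_ineq4)
  also have "norm (p + q - r) \<le> norm (p + q) + norm r" by (rule norm_triangle_ineq4)
  also have "norm (p + q) \<le> norm p + norm q" by (rule norm_triangle_ineq)
  finally show ?thesis by simp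
qed

definition sc :: "real \<Rightarrow> real" where "sc \<theta> = 2 / (1 - 2 powr (1 - \<theta>))"

lemma sc_props: assumes "\<theta> > 1" shows "sc \<theta> > 0" "sc \<theta> * (2 / 2 powr \<theta>) + 2 = sc \<theta>"
proof -
  have q: "2 powr (1 - \<theta>) < 1" using assms by (simp add: powr_less_one)
  then show "sc \<theta> > 0" by (simp add: sc_def)
  have e: "2 / 2 powr \<theta> = 2 powr (1 - \<theta>)" by (simp add: powr_diff)
  show "sc \<theta> * (2 / 2 powr \<theta>) + 2 = sc \<theta>" unfolding e sc_def using q
  proof -
    have "1 - 2 powr (1 - \<theta>) \<noteq> 0" using q by linarith
    then show "2 / (1 - 2 powr (1 - \<theta>)) * 2 powr (1 - \<theta>) + 2 = 2 / (1 - 2 powr (1 - \<theta>))"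
      by (simp add: field_simps)
  qed
qed

lemma sew_bound:
  fixes \<Xi> :: "real \<Rightarrow> real \<Rightarrow> 'a::real_normed_vector"
  assumes th: "\<theta> > 1" and K: "K \<ge> 0"
    and z: "\<forall>u\<in>S. \<Xi> u u = 0"
    and d: "\<forall>u\<in>S. \<forall>m\<in>S. \<forall>v\<in>S. u < m \<longrightarrow> m < v \<longrightarrow> norm (\<Xi> u v - \<Xi> u m - \<Xi> m v) \<le> K * (v - u) powr \<theta>"
  shows "sorted_wrt (<) P \<Longrightarrow> P \<noteq> [] \<Longrightarrow> set P \<subseteq> S \<Longrightarrow>
     norm (gs \<Xi> P - \<Xi> (hd P) (last P)) \<le> sc \<theta> * K * (last P - hd P) powr \<theta>"
proof (induction "length P" arbitrary: P rule: less_induct)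
  case less
  have scp: "sc \<theta> > 0" using sc_props th by auto
  have d': "norm (\<Xi> u v - \<Xi> u m - \<Xi> m v) \<le> K * (v - u) powr \<theta>"
    if "u \<in> S" "m \<in> S" "v \<in> S" "u \<le> m" "m \<le> v" for u m v
  proof (cases "u = m \<or> m = v")
    case True then show ?thesis using z that K by auto
  next
    case False then show ?thesis using d that by auto
  qed
  show ?case
  proof (cases "length P \<le> 2")
    case True
    then consider a where "P = [a]" | a b where "P = [a, b]" using less(3)
      by (cases P; cases "tl P") auto
    then show ?thesis
    proof cases
      case 1 then show ?thesis using z less(4) scp K by auto
    next
      case 2 then show ?thesis using scp K by auto
    qed
  next
    case False
    define a where "a = hd P"
    define b where "b = last P"
    have ab: "a < b" using sorted_hd_last[OF less(2)] False unfolding a_def b_def by auto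
    define mid where "mid = (a + b) / 2"
    define Lf where "Lf = takeWhile (\<lambda>t. t \<le> mid) P"
    define Rt where "Rt = dropWhile (\<lambda>t. t \<le> mid) P"
    have PLR: "P = Lf @ Rt" unfolding Lf_def Rt_def by simp
    have aP: "P = a # tl P" using less(3) unfolding a_def by simp
    have "a \<le> mid" using ab unfolding mid_def by simp
    then have Lne: "Lf \<noteq> []" unfolding Lf_def by (subst aP) simp
    have "b \<in> set P" using less(3) unfolding b_def by simp
    moreover have "b > mid" using ab unfolding mid_def by simp
    ultimately have Rne: "Rt \<noteq> []" unfolding Rt_def by (auto simp: dropWhile_eq_Nil_conv ) (meson not_le)
    define m where "m = last Lf"
    define m' where "m' = hd Rt"
    have mmid: "m \<le> mid" unfolding m_def Lf_def using Lne[unfolded Lf_def]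
      by (metis last_in_set set_takeWhileD)
    have m'mid: "m' > mid" unfolding m'_def Rt_def using Rne[unfolded Rt_def]
      by (metis hd_dropWhile not_le)
    have sL: "sorted_wrt (<) Lf" and sR: "sorted_wrt (<) Rt" and cross: "\<forall>x\<in>set Lf. \<forall>y\<in>set Rt. x < y"
      using less(2) unfolding PLR sorted_wrt_append by auto
    have hdL: "hd Lf = a" using Lne unfolding a_def PLR by simp
    have lastR: "last Rt = b" using Rne unfolding b_def PLR by simp
    have lenL: "length Lf < length P" and lenR: "length Rt < length P"
      using Lne Rne unfolding PLR by auto
    have setL: "set Lf \<subseteq> S" and setR: "set Rt \<subseteq> S" using less(4) unfolding PLR by auto
    have mL: "m \<in> set Lf" unfolding m_def using Lne by simp
    have m'R: "m' \<in> set Rt" unfolding m'_def using Rne by simp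
    have am: "a \<le> m" using sorted_bounds[OF sL Lne mL] hdL by simp
    have mm': "m < m'" using cross mL m'R by auto
    have m'b: "m' \<le> b" using sorted_bounds[OF sR Rne m'R] lastR by simp
    have inS: "a \<in> S" "b \<in> S" "m \<in> S" "m' \<in> S"
      using setL setR mL m'R hdL lastR Lne Rne hd_in_set last_in_set by (metis subsetD)+
    have gsP: "gs \<Xi> P = gs \<Xi> Lf + \<Xi> m m' + gs \<Xi> Rt"
    proof -
      have "P = butlast Lf @ m # (m' # tl Rt)" unfolding PLR m_def m'_def using Lne Rne by simp
      then have "gs \<Xi> P = gs \<Xi> (butlast Lf @ [m]) + gs \<Xi> (m # m' # tl Rt)"
        using gs_append by metis
      also have "butlast Lf @ [m] = Lf" unfolding m_def using Lne by simp
      also have "m' # tl Rt = Rt" unfolding m'_def using Rne by simp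
      finally show ?thesis using Rne unfolding m'_def by (cases Rt) auto
    qed
    have IHL: "norm (gs \<Xi> Lf - \<Xi> a m) \<le> sc \<theta> * K * (m - a) powr \<theta>"
      using less(1)[OF lenL sL Lne setL] hdL m_def by simp
    have IHR: "norm (gs \<Xi> Rt - \<Xi> m' b) \<le> sc \<theta> * K * (b - m') powr \<theta>"
      using less(1)[OF lenR sR Rne setR] lastR m'_def by simp
    have D1: "norm (\<Xi> a b - \<Xi> a m - \<Xi> m b) \<le> K * (b - a) powr \<theta>"
      using d' inS am mm' m'b by auto
    have "norm (\<Xi> m b - \<Xi> m m' - \<Xi> m' b) \<le> K * (b - m) powr \<theta>"
      using d' inS am mm' m'b by auto
    also have "\<dots> \<le> K * (b - a) powr \<theta>"
      using K am mm' m'b th by (intro mult_left_mono powr_mono2) auto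
    finally have D2: "norm (\<Xi> m b - \<Xi> m m' - \<Xi> m' b) \<le> K * (b - a) powr \<theta>" .
    have h1: "(m - a) powr \<theta> \<le> ((b - a) / 2) powr \<theta>"
      using am mmid th unfolding mid_def by (intro powr_mono2) auto
    have h2: "(b - m') powr \<theta> \<le> ((b - a) / 2) powr \<theta>"
      using m'b m'mid th unfolding mid_def by (intro powr_mono2) auto
    have hh: "((b - a) / 2) powr \<theta> = (b - a) powr \<theta> / 2 powr \<theta>"
      using ab by (simp add: powr_divide)
    have eq: "gs \<Xi> P - \<Xi> a b = (gs \<Xi> Lf - \<Xi> a m) + (gs \<Xi> Rt - \<Xi> m' b)
        - (\<Xi> a b - \<Xi> a m - \<Xi> m b) - (\<Xi> m b - \<Xi> m m' - \<Xi> m' b)"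
      unfolding gsP by (simp add: algebra_simps)
    have "norm (gs \<Xi> P - \<Xi> a b) \<le> norm (gs \<Xi> Lf - \<Xi> a m) + norm (gs \<Xi> Rt - \<Xi> m' b)
        + norm (\<Xi> a b - \<Xi> a m - \<Xi> m b) + norm (\<Xi> m b - \<Xi> m m' - \<Xi> m' b)"
      unfolding eq by (rule norm4)
    also have "\<dots> \<le> sc \<theta> * K * (m - a) powr \<theta> + sc \<theta> * K * (b - m') powr \<theta> + K * (b - a) powr \<theta> + K * (b - a) powr \<theta>"
      using IHL IHR D1 D2 by linarith
    also have "\<dots> \<le> sc \<theta> * K * ((b - a) / 2) powr \<theta> + sc \<theta> * K * ((b - a) / 2) powr \<theta> + 2 * K * (b - a) powr \<theta>"
    proof -
      have "sc \<theta> * K * (m - a) powr \<theta> \<le> sc \<theta> * K * ((b - a) / 2) powr \<theta>"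
        using h1 scp K by (intro mult_left_mono) auto
      moreover have "sc \<theta> * K * (b - m') powr \<theta> \<le> sc \<theta> * K * ((b - a) / 2) powr \<theta>"
        using h2 scp K by (intro mult_left_mono) auto
      ultimately show ?thesis by linarith
    qed
    also have "\<dots> = K * (b - a) powr \<theta> * (sc \<theta> * (2 / 2 powr \<theta>) + 2)"
      unfolding hh by (simp add: field_simps)
    also have "\<dots> = sc \<theta> * K * (b - a) powr \<theta>" using sc_props(2)[OF th] by simp
    finally show ?thesis unfolding a_def b_def .
  qed
qed

lemma gs_scale: "gs (\<lambda>a b. c * f a b) P = (c::real) * gs f P"
proof (induction P rule: induct_list012)
  case (3 a b P) then show ?case by (simp add: algebra_simps)
qed auto

lemma refine_bound:
  fixes \<Xi> :: "real \<Rightarrow> real \<Rightarrow> 'a::real_normed_vector"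
  assumes th: "\<theta> > 1" and K: "K \<ge> 0"
    and z: "\<forall>u\<in>S. \<Xi> u u = 0"
    and d: "\<forall>u\<in>S. \<forall>m\<in>S. \<forall>v\<in>S. u < m \<longrightarrow> m < v \<longrightarrow> norm (\<Xi> u v - \<Xi> u m - \<Xi> m v) \<le> K * (v - u) powr \<theta>"
  shows "sorted_wrt (<) P \<Longrightarrow> P \<noteq> [] \<Longrightarrow> sorted_wrt (<) R \<Longrightarrow> set R \<subseteq> S \<Longrightarrow> set P \<subseteq> set R
    \<Longrightarrow> hd R = hd P \<Longrightarrow> last R = last P
    \<Longrightarrow> norm (gs \<Xi> R - gs \<Xi> P) \<le> sc \<theta> * K * gs (\<lambda>a b. (b - a) powr \<theta>) P"
proof (induction P arbitrary: R rule: induct_list012)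
  case 1 then show ?case by simp
next
  case (2 a)
  have "R \<noteq> []" using 2 by auto
  then have "R = [a]" using sorted_hd_eq_last[OF 2(3) \<open>R \<noteq> []\<close>] 2(6,7) by simp
  then show ?case by simp
next
  case (3 a p P')
  have "p \<in> set R" using 3(7) by auto
  then obtain L R' where R: "R = L @ p # R'" by (meson split_list)
  have sR: "sorted_wrt (<) L" "sorted_wrt (<) (p # R')" "\<forall>x\<in>set L. x < p" "\<forall>x\<in>set L. \<forall>y\<in>set R'. x < y"
    using 3(5) unfolding R sorted_wrt_append by auto
  have sLp: "sorted_wrt (<) (L @ [p])" using sR by (simp add: sorted_wrt_append)
  have Lne: "L \<noteq> []"
  proof
    assume "L = []"
    then have "hd R = p" using R by simp
    then show False using 3(8) 3(3) by simp
  qed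
  have hdL: "hd (L @ [p]) = a" using Lne 3(8) R by simp
  have sub: "set (p # P') \<subseteq> set (p # R')"
  proof
    fix q assume q: "q \<in> set (p # P')"
    show "q \<in> set (p # R')"
    proof (cases "q = p")
      case False
      then have "q \<in> set P'" using q by simp
      then have "q > p" using 3(3) by simp
      moreover have "q \<in> set R" using 3(7) \<open>q \<in> set P'\<close> by auto
      ultimately show ?thesis using R sR(3) by auto
    qed simp
  qed
  have lastR: "last (p # R') = last (p # P')" using 3(9) R by simp
  have IH: "norm (gs \<Xi> (p # R') - gs \<Xi> (p # P')) \<le> sc \<theta> * K * gs (\<lambda>a b. (b - a) powr \<theta>) (p # P')"
    using 3(2)[OF _ _ sR(2) _ sub _ lastR] 3(3) 3(6) R by auto
  have SB: "norm (gs \<Xi> (L @ [p]) - \<Xi> a p) \<le> sc \<theta> * K * (p - a) powr \<theta>"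
    using sew_bound[OF th K z d sLp] 3(6) R hdL by auto
  have eqR: "gs \<Xi> R - gs \<Xi> (a # p # P') = (gs \<Xi> (L @ [p]) - \<Xi> a p) + (gs \<Xi> (p # R') - gs \<Xi> (p # P'))"
    unfolding R gs_append[of \<Xi> L p R'] by simp
  have "norm (gs \<Xi> R - gs \<Xi> (a # p # P')) \<le> norm (gs \<Xi> (L @ [p]) - \<Xi> a p) + norm (gs \<Xi> (p # R') - gs \<Xi> (p # P'))"
    unfolding eqR by (rule norm_triangle_ineq)
  also have "\<dots> \<le> sc \<theta> * K * (p - a) powr \<theta> + sc \<theta> * K * gs (\<lambda>a b. (b - a) powr \<theta>) (p # P')"
    using IH SB by linarith
  finally show ?case by (simp add: algebra_simps)
qed

lemma mesh_sum_bound: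
  assumes th: "\<theta> > 1" and P: "sorted_wrt (<) P" "P \<noteq> []"
  shows "gs (\<lambda>a b. (b - a) powr \<theta>) P \<le> mesh P powr (\<theta> - 1) * (last P - hd P)"
proof -
  have "gs (\<lambda>a b. (b - a) powr \<theta>) P \<le> gs (\<lambda>a b. mesh P powr (\<theta> - 1) * (b - a)) P"
  proof (rule gs_mono)
    fix a b assume ab: "(a, b) \<in> set (zip P (tl P))"
    have lt: "a < b" using zip_tl_sorted[OF P(1) ab] .
    have "(b - a) powr \<theta> = (b - a) powr (\<theta> - 1) * (b - a)"
      using lt by (simp add: powr_diff)
    also have "\<dots> \<le> mesh P powr (\<theta> - 1) * (b - a)"
      using lt th mesh_ge[OF ab] by (intro mult_right_mono powr_mono2) auto
    finally show "(b - a) powr \<theta> \<le> mesh P powr (\<theta> - 1) * (b - a)" .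
  qed
  also have "\<dots> = mesh P powr (\<theta> - 1) * (last P - hd P)"
    using gs_scale[of "mesh P powr (\<theta> - 1)" "\<lambda>a b. b - a" P] gs_telescope[OF P(2), of "\<lambda>x. x"] by simp
  finally show ?thesis .
qed

lemma partition_set: "is_partition P a b \<Longrightarrow> set P \<subseteq> {a..b}"
  unfolding is_partition_def using sorted_bounds by fastforce

lemma two_partitions:
  fixes \<Xi> :: "real \<Rightarrow> real \<Rightarrow> 'a::real_normed_vector"
  assumes th: "\<theta> > 1" and K: "K \<ge> 0"
    and z: "\<forall>u\<in>{a..b}. \<Xi> u u = 0"
    and d: "\<forall>u\<in>{a..b}. \<forall>m\<in>{a..b}. \<forall>v\<in>{a..b}. u < m \<longrightarrow> m < v \<longrightarrow> norm (\<Xi> u v - \<Xi> u m - \<Xi> m v) \<le> K * (v - u) powr \<theta>"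
    and P: "is_partition P a b" and Q: "is_partition Q a b"
  shows "norm (gs \<Xi> P - gs \<Xi> Q) \<le> sc \<theta> * K * (b - a) * (mesh P powr (\<theta> - 1) + mesh Q powr (\<theta> - 1))"
proof -
  define R where "R = sorted_list_of_set (set P \<union> set Q)"
  have sR: "sorted_wrt (<) R" unfolding R_def by (rule strict_sorted_list_of_set)
  have setR: "set R = set P \<union> set Q" unfolding R_def by simp
  have Rsub: "set R \<subseteq> {a..b}" using setR partition_set[OF P] partition_set[OF Q] by auto
  have aR: "a \<in> set R" "b \<in> set R" using P setR unfolding is_partition_def
    by (metis Un_iff hd_in_set last_in_set)+
  have Rne: "R \<noteq> []" using aR by auto
  have hdR: "hd R = a" using sorted_bounds[OF sR Rne aR(1)] Rsub Rne hd_in_set by fastforce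
  have lastR: "last R = b" using sorted_bounds[OF sR Rne aR(2)] Rsub Rne last_in_set by fastforce
  have sc0: "sc \<theta> > 0" using sc_props th by auto
  have bnd: "norm (gs \<Xi> R - gs \<Xi> X) \<le> sc \<theta> * K * (b - a) * mesh X powr (\<theta> - 1)"
    if X: "is_partition X a b" "set X \<subseteq> set R" for X
  proof -
    have sX: "sorted_wrt (<) X" "X \<noteq> []" "hd X = a" "last X = b" using X unfolding is_partition_def by auto
    have "norm (gs \<Xi> R - gs \<Xi> X) \<le> sc \<theta> * K * gs (\<lambda>a b. (b - a) powr \<theta>) X"
      using refine_bound[OF th K z d sX(1,2) sR Rsub X(2)] hdR lastR sX by simp
    also have "\<dots> \<le> sc \<theta> * K * (mesh X powr (\<theta> - 1) * (b - a))"
      using mesh_sum_bound[OF th sX(1,2)] sX sc0 K by (intro mult_left_mono) auto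
    finally show ?thesis by (simp add: algebra_simps)
  qed
  have e: "gs \<Xi> P - gs \<Xi> Q = (gs \<Xi> R - gs \<Xi> Q) - (gs \<Xi> R - gs \<Xi> P)" by simp
  have "norm (gs \<Xi> P - gs \<Xi> Q) \<le> norm (gs \<Xi> R - gs \<Xi> Q) + norm (gs \<Xi> R - gs \<Xi> P)"
    unfolding e by (rule norm_triangle_ineq4)
  then have "norm (gs \<Xi> P - gs \<Xi> Q) \<le> norm (gs \<Xi> R - gs \<Xi> P) + norm (gs \<Xi> R - gs \<Xi> Q)" by linarith
  also have "\<dots> \<le> sc \<theta> * K * (b - a) * mesh P powr (\<theta> - 1) + sc \<theta> * K * (b - a) * mesh Q powr (\<theta> - 1)"
    using bnd[OF P] bnd[OF Q] setR by (intro add_mono) auto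
  finally show ?thesis by (simp add: algebra_simps)
qed

definition unif :: "real \<Rightarrow> real \<Rightarrow> nat \<Rightarrow> real list" where
  "unif a b n = map (\<lambda>k. a + real k * (b - a) / real (Suc n)) [0..<Suc (Suc n)]"

lemma unif_nth: "k < Suc (Suc n) \<Longrightarrow> unif a b n ! k = a + real k * (b - a) / real (Suc n)"
  unfolding unif_def by (simp del: upt_Suc)

lemma unif_len: "length (unif a b n) = Suc (Suc n)"
  unfolding unif_def by simp

lemma unif_partition: assumes "a < b" shows "is_partition (unif a b n) a b"
proof -
  define f where "f = (\<lambda>k::nat. a + real k * (b - a) / real (Suc n))"
  have mono: "f x < f y" if "x < y" for x y
  proof -
    have "real x * (b - a) < real y * (b - a)" using that assms by (intro mult_strict_right_mono) auto
    then have "real x * (b - a) / real (Suc n) < real y * (b - a) / real (Suc n)"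
      by (intro divide_strict_right_mono) auto
    then show ?thesis unfolding f_def by simp
  qed
  have "sorted_wrt (\<lambda>x y. f x < f y) [0..<Suc (Suc n)]"
    by (rule sorted_wrt_mono_rel[OF _ sorted_wrt_upt]) (simp add: mono)
  then have "sorted_wrt (<) (unif a b n)" unfolding unif_def f_def[symmetric] sorted_wrt_map .
  moreover have ne: "unif a b n \<noteq> []" using unif_len[of a b n] by (cases "unif a b n") auto
  moreover have "last (unif a b n) = b"
  proof -
    have "last (unif a b n) = unif a b n ! Suc n" using ne by (simp add: last_conv_nth unif_len)
    also have "\<dots> = b" by (simp add: unif_nth)
    finally show ?thesis .
  qed
  moreover have "hd (unif a b n) = a" using ne by (simp add: hd_conv_nth unif_len unif_nth)
  ultimately show ?thesis unfolding is_partition_def by simp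
qed

lemma unif_mesh: assumes "a < b" shows "mesh (unif a b n) \<le> (b - a) / real (Suc n)"
proof -
  have "\<forall>x\<in>set (map (\<lambda>(a, b). b - a) (zip (unif a b n) (tl (unif a b n)))). x \<le> (b - a) / real (Suc n)"
  proof
    fix x assume "x \<in> set (map (\<lambda>(a, b). b - a) (zip (unif a b n) (tl (unif a b n))))"
    then obtain u v where uv: "(u,v) \<in> set (zip (unif a b n) (tl (unif a b n)))" "x = v - u" by auto
    then obtain i where i0: "i < min (length (unif a b n)) (length (tl (unif a b n)))"
       "u = unif a b n ! i" "v = tl (unif a b n) ! i" unfolding set_zip by blast
    have i: "i < Suc n" "x = unif a b n ! Suc i - unif a b n ! i"
      using i0 uv(2) by (auto simp: unif_len nth_tl)
    have "x = real (Suc i) * (b - a) / real (Suc n) - real i * (b - a) / real (Suc n)"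
      using i by (simp add: unif_nth)
    also have "\<dots> = (real (Suc i) * (b - a) - real i * (b - a)) / real (Suc n)" by (simp add: diff_divide_distrib)
    also have "real (Suc i) * (b - a) - real i * (b - a) = b - a" by (simp add: algebra_simps)
    finally show "x \<le> (b - a) / real (Suc n)" by simp
  qed
  then show ?thesis unfolding mesh_def using assms by (intro foldr_max_le) auto
qed

lemma unif_mesh_lim: assumes "a < b" shows "(\<lambda>n. mesh (unif a b n)) \<longlonglongrightarrow> 0"
proof (rule tendsto_sandwich[of "\<lambda>n. 0" _ _ "\<lambda>n. (b - a) / real (Suc n)"])
  show "\<forall>\<^sub>F n in sequentially. 0 \<le> mesh (unif a b n)" by (simp add: mesh_nonneg)
  show "\<forall>\<^sub>F n in sequentially. mesh (unif a b n) \<le> (b - a) / real (Suc n)" using unif_mesh[OF assms] by simp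
  show "(\<lambda>n. (b - a) / real (Suc n)) \<longlonglongrightarrow> 0"
    using tendsto_mult[OF tendsto_const[of "b - a"] LIMSEQ_inverse_real_of_nat] by (simp add: divide_inverse)
qed simp

lemma conv_unif:
  assumes "\<forall>\<epsilon>>0. \<exists>\<delta>>0. \<forall>P. is_partition P a b \<and> mesh P < \<delta> \<longrightarrow> norm (gs \<Xi> P - I) < \<epsilon>" and "a < b"
  shows "(\<lambda>n. gs \<Xi> (unif a b n)) \<longlonglongrightarrow> I"
  unfolding tendsto_iff
proof (intro allI impI)
  fix e :: real assume e: "e > 0"
  then obtain \<delta> where d: "\<delta> > 0" "\<forall>P. is_partition P a b \<and> mesh P < \<delta> \<longrightarrow> norm (gs \<Xi> P - I) < e"
    using assms(1) by blast
  have "eventually (\<lambda>n. mesh (unif a b n) < \<delta>) sequentially"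
    using order_tendstoD(2)[OF unif_mesh_lim[OF assms(2)] d(1)] .
  then show "eventually (\<lambda>n. dist (gs \<Xi> (unif a b n)) I < e) sequentially"
    by eventually_elim (simp add: dist_norm d(2) unif_partition[OF assms(2)])
qed

lemma sewing_exists:
  fixes \<Xi> :: "real \<Rightarrow> real \<Rightarrow> 'a::banach"
  assumes th: "\<theta> > 1" and K: "K \<ge> 0"
    and z: "\<forall>u\<in>{a..b}. \<Xi> u u = 0"
    and d: "\<forall>u\<in>{a..b}. \<forall>m\<in>{a..b}. \<forall>v\<in>{a..b}. u < m \<longrightarrow> m < v \<longrightarrow> norm (\<Xi> u v - \<Xi> u m - \<Xi> m v) \<le> K * (v - u) powr \<theta>"
    and ab: "a < b"
  shows "\<exists>I. \<forall>\<epsilon>>0. \<exists>\<delta>>0. \<forall>P. is_partition P a b \<and> mesh P < \<delta> \<longrightarrow> norm (gs \<Xi> P - I) < \<epsilon>"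
proof -
  define c where "c = sc \<theta> * K * (b - a)"
  have c0: "c \<ge> 0" unfolding c_def using sc_props[OF th] K ab by simp
  define E where "E = (\<lambda>P. c * mesh P powr (\<theta> - 1))"
  have E0: "E P \<ge> 0" for P unfolding E_def using c0 by simp
  have TP: "norm (gs \<Xi> P - gs \<Xi> Q) \<le> E P + E Q" if "is_partition P a b" "is_partition Q a b" for P Q
    using two_partitions[OF th K z d that] unfolding E_def c_def by (simp add: algebra_simps)
  define S where "S = (\<lambda>n. gs \<Xi> (unif a b n))"
  have EU: "(\<lambda>n. E (unif a b n)) \<longlonglongrightarrow> 0"
  proof -
    have "(\<lambda>n. mesh (unif a b n) powr (\<theta> - 1)) \<longlonglongrightarrow> 0"
      by (rule tendsto_zero_powrI[OF unif_mesh_lim[OF ab] tendsto_const]) (use th mesh_nonneg in auto)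
    then show ?thesis unfolding E_def using tendsto_mult_right_zero by blast
  qed
  have "Cauchy S"
  proof (rule metric_CauchyI)
    fix e :: real assume e: "e > 0"
    have "eventually (\<lambda>n. E (unif a b n) < e / 2) sequentially"
      by (rule order_tendstoD(2)[OF EU]) (use e in simp)
    then obtain M where M: "\<forall>n\<ge>M. E (unif a b n) < e / 2" by (auto simp: eventually_sequentially)
    show "\<exists>M. \<forall>m\<ge>M. \<forall>n\<ge>M. dist (S m) (S n) < e"
    proof (intro exI allI impI)
      fix m n assume "m \<ge> M" "n \<ge> M"
      then have "dist (S m) (S n) \<le> E (unif a b m) + E (unif a b n)"
        unfolding S_def dist_norm using TP unif_partition[OF ab] by blast
      also have "\<dots> < e"
      proof -
        have "E (unif a b m) < e / 2" "E (unif a b n) < e / 2" using M \<open>m \<ge> M\<close> \<open>n \<ge> M\<close> by auto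
        then show ?thesis by linarith
      qed
      finally show "dist (S m) (S n) < e" .
    qed
  qed
  then obtain I where SI: "S \<longlonglongrightarrow> I" using Cauchy_convergent_iff convergent_def by blast
  have PI: "norm (gs \<Xi> P - I) \<le> E P" if P: "is_partition P a b" for P
  proof (rule tendsto_le[OF trivial_limit_sequentially])
    show "(\<lambda>n. E P + E (unif a b n)) \<longlonglongrightarrow> E P" using tendsto_add[OF tendsto_const EU] by simp
    show "(\<lambda>n. norm (gs \<Xi> P - S n)) \<longlonglongrightarrow> norm (gs \<Xi> P - I)"
      by (intro tendsto_norm tendsto_diff tendsto_const SI)
    show "\<forall>\<^sub>F n in sequentially. norm (gs \<Xi> P - S n) \<le> E P + E (unif a b n)"
      unfolding S_def using TP[OF P unif_partition[OF ab]] by simp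
  qed
  show ?thesis
  proof (rule exI[of _ I], intro allI impI)
    fix \<epsilon> :: real assume \<epsilon>: "\<epsilon> > 0"
    define x where "x = \<epsilon> / (2 * (c + 1))"
    have x0: "x > 0" unfolding x_def using \<epsilon> c0 by simp
    define \<delta> where "\<delta> = x powr (1 / (\<theta> - 1))"
    have \<delta>0: "\<delta> > 0" unfolding \<delta>_def using x0 by simp
    have \<delta>x: "\<delta> powr (\<theta> - 1) = x" unfolding \<delta>_def using th x0 by (simp add: powr_powr)
    show "\<exists>\<delta>>0. \<forall>P. is_partition P a b \<and> mesh P < \<delta> \<longrightarrow> norm (gs \<Xi> P - I) < \<epsilon>"
    proof -
    have "\<forall>P. is_partition P a b \<and> mesh P < \<delta> \<longrightarrow> norm (gs \<Xi> P - I) < \<epsilon>"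
    proof (intro allI impI)
      fix P assume P: "is_partition P a b \<and> mesh P < \<delta>"
      have "mesh P powr (\<theta> - 1) \<le> \<delta> powr (\<theta> - 1)"
        using P th mesh_nonneg[of P] by (intro powr_mono2) auto
      then have "E P \<le> c * x" unfolding E_def \<delta>x using c0 by (simp add: mult_left_mono)
      also have "\<dots> < \<epsilon>" 
      proof -
        have "c / (2 * (c + 1)) < 1" using c0 by simp
        then have "\<epsilon> * (c / (2 * (c + 1))) < \<epsilon> * 1" using \<epsilon> by (intro mult_strict_left_mono) auto
        moreover have "c * x = \<epsilon> * (c / (2 * (c + 1)))" unfolding x_def by simp
        ultimately show "c * x < \<epsilon>" by simp
      qed
      finally have "E P < \<epsilon>" .
      then show "norm (gs \<Xi> P - I) < \<epsilon>" 
      proof -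
        have "norm (gs \<Xi> P - I) \<le> E P" using PI P by blast
        then show ?thesis using \<open>E P < \<epsilon>\<close> by linarith
      qed
    qed
    then show ?thesis using \<delta>0 by blast
    qed
  qed
qed

lemma sublinear_bound:
  fixes N a C T' \<beta> :: real
  assumes h: "N \<le> a * (C + N * T') powr \<beta>" and N0: "0 \<le> N" and C0: "0 \<le> C" and T0: "0 < T'"
    and a0: "0 \<le> a" and b0: "0 < \<beta>" and b1: "\<beta> < 1"
  shows "N \<le> max (a * (2 * C) powr \<beta>) ((a * (2 * T') powr \<beta>) powr (1 / (1 - \<beta>)))"
proof (cases "N * T' \<le> C")
  case True
  have nt: "0 \<le> N * T'" using N0 T0 by simp
  have "(C + N * T') powr \<beta> \<le> (2 * C) powr \<beta>"
  proof (rule powr_mono2)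
    show "0 \<le> \<beta>" using b0 by simp
    show "0 \<le> C + N * T'" using nt C0 by linarith
    show "C + N * T' \<le> 2 * C" using True by linarith
  qed
  then have "a * (C + N * T') powr \<beta> \<le> a * (2 * C) powr \<beta>" using a0 by (rule mult_left_mono)
  then have "N \<le> a * (2 * C) powr \<beta>" using h by linarith
  then show ?thesis by simp
next
  case False
  have nt: "0 \<le> N * T'" using N0 T0 by simp
  have "N \<noteq> 0" using False C0 by auto
  then have Np: "N > 0" using N0 by simp
  have "(C + N * T') powr \<beta> \<le> (2 * T' * N) powr \<beta>"
  proof (rule powr_mono2)
    show "0 \<le> \<beta>" using b0 by simp
    show "0 \<le> C + N * T'" using nt C0 by linarith
    have "2 * T' * N = 2 * (N * T')" by simp
    then show "C + N * T' \<le> 2 * T' * N" using False by linarith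
  qed
  also have "\<dots> = (2 * T') powr \<beta> * N powr \<beta>" using T0 N0 by (simp add: powr_mult)
  finally have "a * (C + N * T') powr \<beta> \<le> a * ((2 * T') powr \<beta> * N powr \<beta>)" using a0 by (rule mult_left_mono)
  then have "N \<le> a * ((2 * T') powr \<beta> * N powr \<beta>)" using h by linarith
  then have h2: "N \<le> (a * (2 * T') powr \<beta>) * N powr \<beta>" by (simp add: algebra_simps)
  have "N powr (1 - \<beta>) = N / N powr \<beta>" using Np by (simp add: powr_diff)
  also have "\<dots> \<le> a * (2 * T') powr \<beta>" using h2 Np by (simp add: divide_le_eq)
  finally have h3: "N powr (1 - \<beta>) \<le> a * (2 * T') powr \<beta>" .
  have "N = (N powr (1 - \<beta>)) powr (1 / (1 - \<beta>))" using Np b1 by (simp add: powr_powr)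
  also have "\<dots> \<le> (a * (2 * T') powr \<beta>) powr (1 / (1 - \<beta>))"
    using h3 Np b1 by (intro powr_mono2) auto
  finally show ?thesis by simp
qed

lemma holder_cont:
  fixes f :: "'a::real_normed_vector \<Rightarrow> 'b::real_normed_vector"
  assumes "\<And>x y. norm (f x - f y) \<le> K * norm (x - y) powr \<beta>" "\<beta> > 0" "K \<ge> 0"
  shows "continuous_on UNIV f"
  unfolding continuous_on_iff
proof (intro ballI allI impI)
  fix x :: 'a and e :: real assume e: "e > 0"
  define d where "d = (e / (K + 1)) powr (1 / \<beta>)"
  have d0: "d > 0" unfolding d_def using e assms by simp
  have dd: "d powr \<beta> = e / (K + 1)" unfolding d_def using e assms by (simp add: powr_powr)
  show "\<exists>d>0. \<forall>x'\<in>UNIV. dist x' x < d \<longrightarrow> dist (f x') (f x) < e"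
  proof (intro exI[of _ d] conjI ballI impI d0)
    fix x' assume "dist x' x < d"
    then have "norm (x' - x) powr \<beta> \<le> d powr \<beta>" using assms by (intro powr_mono2) (auto simp: dist_norm)
    then have "norm (x' - x) powr \<beta> \<le> e / (K + 1)" unfolding dd .
    then have "K * norm (x' - x) powr \<beta> \<le> K * (e / (K + 1))" using assms(3) by (rule mult_left_mono)
    also have "\<dots> < e" using e assms by (simp add: field_simps)
    finally show "dist (f x') (f x) < e" using assms(1)[of x' x] by (simp add: dist_norm)
  qed
qed

definition Nst :: "real \<Rightarrow> real \<Rightarrow> real \<Rightarrow> real \<Rightarrow> real \<Rightarrow> real \<Rightarrow> real" where
  "Nst \<theta> C B T \<alpha> \<beta> = max (sc \<theta> * C * B powr \<beta> * (2 * C) powr \<beta>)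
       ((sc \<theta> * C * B powr \<beta> * (2 * T powr (\<theta> - \<alpha>)) powr \<beta>) powr (1 / (1 - \<beta>)))"

lemma euler_core:
  fixes A :: "real \<Rightarrow> 'v::real_normed_vector \<Rightarrow> 'w::real_normed_vector" and \<iota> :: "'w \<Rightarrow> 'v"
    and g :: "nat \<Rightarrow> real" and y :: "nat \<Rightarrow> 'w" and Xf :: "real \<Rightarrow> 'v"
  assumes bl: "bounded_linear \<iota>" and Bi: "\<forall>w. norm (\<iota> w) \<le> B * norm w" and B0: "B > 0"
    and C0: "C \<ge> 0" and T0: "T > 0" and a0: "0 < \<alpha>" and b0: "0 < \<beta>" and b1: "\<beta> < 1"
    and th: "\<alpha> + \<alpha> * \<beta> > 1"
    and HA1: "\<forall>u v x. 0 \<le> u \<longrightarrow> u \<le> v \<longrightarrow> v \<le> T \<longrightarrow> norm (A v x - A u x) \<le> C * (v - u) powr \<alpha>"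
    and HA2: "\<forall>u v x y. 0 \<le> u \<longrightarrow> u \<le> v \<longrightarrow> v \<le> T \<longrightarrow>
        norm ((A v x - A u x) - (A v y - A u y)) \<le> C * (v - u) powr \<alpha> * norm (x - y) powr \<beta>"
    and mono: "\<forall>i j. i < j \<longrightarrow> j \<le> n \<longrightarrow> g i < g j" and rng: "\<forall>k\<le>n. 0 \<le> g k \<and> g k \<le> T"
    and Xg: "\<forall>k\<le>n. Xf (g k) = x0 + \<iota> (y k)"
    and rec: "\<forall>k<n. y (Suc k) = y k + (A (g (Suc k)) (Xf (g k)) - A (g k) (Xf (g k)))"
  shows "i < k \<Longrightarrow> k \<le> n \<Longrightarrow> norm (y k - y i - (A (g k) (Xf (g i)) - A (g i) (Xf (g i))))
           \<le> Nst (\<alpha> + \<alpha> * \<beta>) C B T \<alpha> \<beta> * (g k - g i) powr (\<alpha> + \<alpha> * \<beta>)"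
proof -
  define \<theta> where "\<theta> = \<alpha> + \<alpha> * \<beta>"
  have th1: "\<theta> > 1" using th unfolding \<theta>_def .
  have thpos: "\<theta> - \<alpha> > 0" unfolding \<theta>_def using a0 b0 by simp
  define \<Xi> where "\<Xi> = (\<lambda>a b. A b (Xf a) - A a (Xf a))"
  define S where "S = g ` {..n}"
  have gsP: "gs \<Xi> (map g [i..<Suc k]) = y k - y i" if "i < k" "k \<le> n" for i k
    using that
  proof (induction k)
    case 0 then show ?case by simp
  next
    case (Suc k)
    show ?case
    proof (cases "k = i")
      case True
      then show ?thesis using rec Suc(3) by (simp add: \<Xi>_def)
    next
      case False
      then have ik: "i < k" using Suc(2) by simp
      have IH: "gs \<Xi> (map g [i..<Suc k]) = y k - y i" using Suc(1)[OF ik] Suc(3) by simp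
      have e1: "map g [i..<Suc (Suc k)] = map g [i..<k] @ [g k, g (Suc k)]" using ik by simp
      have e2: "map g [i..<k] @ [g k] = map g [i..<Suc k]" using ik by simp
      have "gs \<Xi> (map g [i..<Suc (Suc k)]) = gs \<Xi> (map g [i..<Suc k]) + \<Xi> (g k) (g (Suc k))"
        unfolding e1 gs_snoc e2 ..
      also have "\<dots> = y (Suc k) - y i" using IH rec Suc(3) by (simp add: \<Xi>_def)
      finally show ?thesis .
    qed
  qed
  have sortedP: "sorted_wrt (<) (map g [i..<Suc k])" if "k \<le> n" for i k
  proof -
    have "sorted_wrt (\<lambda>a b. g a < g b) [i..<Suc k]"
      by (rule sorted_wrt_mono_rel[OF _ sorted_wrt_upt]) (use mono that in auto)
    then show ?thesis by (simp add: sorted_wrt_map)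
  qed
  have hdP: "hd (map g [i..<Suc k]) = g i" if "i \<le> k" for i k
  proof -
    have "[i..<Suc k] = i # [Suc i..<Suc k]" using that upt_conv_Cons[of i "Suc k"] by simp
    then show ?thesis by simp
  qed
  have lastP: "last (map g [i..<Suc k]) = g k" if "i \<le> k" for i k using that by simp
  have setP: "set (map g [i..<Suc k]) \<subseteq> S" if "k \<le> n" for i k using that unfolding S_def by auto
  have neP: "map g [i..<Suc k] \<noteq> []" if "i \<le> k" for i k using that by simp
  have ord: "i < j" if "i \<le> n" "j \<le> n" "g i < g j" for i j
  proof (rule ccontr)
    assume "\<not> i < j"
    then have "j = i \<or> j < i" by auto
    then show False using mono that by (metis less_asym)
  qed
  have Slocs: "0 \<le> u \<and> u \<le> T" if "u \<in> S" for u using that rng unfolding S_def by auto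
  define ratio where "ratio = (\<lambda>p. norm (y (snd p) - y (fst p) - \<Xi> (g (fst p)) (g (snd p))) / (g (snd p) - g (fst p)) powr \<theta>)"
  define D where "D = {p. fst p < snd p \<and> snd p \<le> n}"
  show "norm (y k - y i - (A (g k) (Xf (g i)) - A (g i) (Xf (g i))))
           \<le> Nst (\<alpha> + \<alpha> * \<beta>) C B T \<alpha> \<beta> * (g k - g i) powr (\<alpha> + \<alpha> * \<beta>)" if ik: "i < k" "k \<le> n"
  proof -
    have finD: "finite D"
      by (rule finite_subset[of _ "{..n} \<times> {..n}"]) (auto simp: D_def)
    have ikD: "(i, k) \<in> D" using ik unfolding D_def by simp
    then have Dne: "D \<noteq> {}" by auto
    define N where "N = Max (ratio ` D)"
    have rN: "ratio p \<le> N" if "p \<in> D" for p unfolding N_def using finD that by simp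
    have NinD: "N \<in> ratio ` D" unfolding N_def using finD Dne by simp
    have N0: "N \<ge> 0" using rN[OF ikD] unfolding ratio_def by (meson divide_nonneg_nonneg norm_ge_zero powr_ge_zero order_trans)
    have Dpos: "g k' - g i' > 0" if "i' < k'" "k' \<le> n" for i' k' using mono that by simp
    have bnd: "norm (y k' - y i' - \<Xi> (g i') (g k')) \<le> N * (g k' - g i') powr \<theta>" if "i' < k'" "k' \<le> n" for i' k'
    proof -
      have "ratio (i', k') \<le> N" using rN that unfolding D_def by simp
      then show ?thesis unfolding ratio_def using Dpos[OF that] by (simp add: pos_divide_le_eq)
    qed
    define T' where "T' = T powr (\<theta> - \<alpha>)"
    have T'0: "T' > 0" unfolding T'_def using T0 by simp
    define H where "H = B * (C + N * T')"
    have H0: "H \<ge> 0" unfolding H_def using B0 C0 N0 T'0 by simp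
    have hX: "norm (Xf (g k') - Xf (g i')) \<le> H * (g k' - g i') powr \<alpha>" if "i' < k'" "k' \<le> n" for i' k'
    proof -
      define \<Delta> where "\<Delta> = g k' - g i'"
      have \<Delta>0: "\<Delta> > 0" unfolding \<Delta>_def using Dpos[OF that] .
      have \<Delta>T: "\<Delta> \<le> T"
      proof -
        have "g k' \<le> T" "0 \<le> g i'" using rng that by auto
        then show ?thesis unfolding \<Delta>_def by linarith
      qed
      have "Xf (g k') - Xf (g i') = \<iota> (y k' - y i')" using Xg that linear_diff[OF bounded_linear.linear[OF bl]] by simp
      then have "norm (Xf (g k') - Xf (g i')) \<le> B * norm (y k' - y i')" using Bi by simp
      moreover have "norm (y k' - y i') \<le> C * \<Delta> powr \<alpha> + N * \<Delta> powr \<theta>"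
      proof -
        have "norm (y k' - y i') \<le> norm (\<Xi> (g i') (g k')) + norm (y k' - y i' - \<Xi> (g i') (g k'))"
          by (rule norm_triangle_sub)
        moreover have "norm (\<Xi> (g i') (g k')) \<le> C * \<Delta> powr \<alpha>"
          unfolding \<Xi>_def \<Delta>_def using HA1 rng that Dpos[OF that] by simp
        moreover have "norm (y k' - y i' - \<Xi> (g i') (g k')) \<le> N * \<Delta> powr \<theta>" unfolding \<Delta>_def using bnd[OF that] .
        ultimately show ?thesis by linarith
      qed
      moreover have "\<Delta> powr \<theta> \<le> \<Delta> powr \<alpha> * T'"
      proof -
        have "\<Delta> powr \<theta> = \<Delta> powr \<alpha> * \<Delta> powr (\<theta> - \<alpha>)" using \<Delta>0 by (simp add: powr_add[symmetric])
        also have "\<dots> \<le> \<Delta> powr \<alpha> * T'" unfolding T'_def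
          using \<Delta>0 \<Delta>T thpos by (intro mult_left_mono powr_mono2) auto
        finally show ?thesis .
      qed
      ultimately have "norm (Xf (g k') - Xf (g i')) \<le> B * (C * \<Delta> powr \<alpha> + N * (\<Delta> powr \<alpha> * T'))"
        using B0 N0 by (smt (verit) mult_left_mono)
      also have "\<dots> = H * \<Delta> powr \<alpha>" unfolding H_def by (simp add: algebra_simps)
      finally show ?thesis unfolding \<Delta>_def .
    qed
    have hXS: "norm (Xf m - Xf u) \<le> H * (m - u) powr \<alpha>" if uS: "u \<in> S" and mS: "m \<in> S" and um: "u < m" for u m
    proof -
      obtain i' where i': "i' \<le> n" "u = g i'" using uS unfolding S_def by blast
      obtain k' where k': "k' \<le> n" "m = g k'" using mS unfolding S_def by blast
      have "i' < k'" using ord[OF i'(1) k'(1)] um i' k' by simp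
      then show ?thesis using hX k' i' by simp
    qed
    define K where "K = C * H powr \<beta>"
    have K0: "K \<ge> 0" unfolding K_def using C0 by simp
    have z: "\<forall>u\<in>S. \<Xi> u u = 0" unfolding \<Xi>_def by simp
    have d: "\<forall>u\<in>S. \<forall>m\<in>S. \<forall>v\<in>S. u < m \<longrightarrow> m < v \<longrightarrow> norm (\<Xi> u v - \<Xi> u m - \<Xi> m v) \<le> K * (v - u) powr \<theta>"
    proof (intro ballI impI)
      fix u m v assume uS: "u \<in> S" and mS: "m \<in> S" and vS: "v \<in> S" and um: "u < m" and mv: "m < v"
      have e: "\<Xi> u v - \<Xi> u m - \<Xi> m v = (A v (Xf u) - A m (Xf u)) - (A v (Xf m) - A m (Xf m))"
        unfolding \<Xi>_def by (simp add: algebra_simps)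
      have "norm (\<Xi> u v - \<Xi> u m - \<Xi> m v) \<le> C * (v - m) powr \<alpha> * norm (Xf u - Xf m) powr \<beta>"
        unfolding e using HA2 Slocs[OF mS] Slocs[OF vS] mv by simp
      also have "\<dots> \<le> C * (v - u) powr \<alpha> * (H powr \<beta> * (v - u) powr (\<alpha> * \<beta>))"
      proof (rule mult_mono)
        show "C * (v - m) powr \<alpha> \<le> C * (v - u) powr \<alpha>"
          using C0 um mv a0 by (intro mult_left_mono powr_mono2) auto
        have "norm (Xf u - Xf m) powr \<beta> \<le> (H * (m - u) powr \<alpha>) powr \<beta>"
          using hXS[OF uS mS um] b0 by (intro powr_mono2) (auto simp: norm_minus_commute)
        also have "\<dots> = H powr \<beta> * (m - u) powr (\<alpha> * \<beta>)"
          using H0 um by (simp add: powr_mult powr_powr)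
        also have "\<dots> \<le> H powr \<beta> * (v - u) powr (\<alpha> * \<beta>)"
          using um mv a0 b0 by (intro mult_left_mono powr_mono2) auto
        finally show "norm (Xf u - Xf m) powr \<beta> \<le> H powr \<beta> * (v - u) powr (\<alpha> * \<beta>)" .
        show "0 \<le> C * (v - u) powr \<alpha>" using C0 by simp
        show "0 \<le> norm (Xf u - Xf m) powr \<beta>" by simp
      qed
      also have "\<dots> = K * (v - u) powr \<theta>"
        unfolding K_def \<theta>_def using um mv by (simp add: powr_add algebra_simps)
      finally show "norm (\<Xi> u v - \<Xi> u m - \<Xi> m v) \<le> K * (v - u) powr \<theta>" .
    qed
    have ratio_le: "ratio p \<le> sc \<theta> * K" if pD: "p \<in> D" for p
    proof -
      obtain i' k' where p: "p = (i', k')" "i' < k'" "k' \<le> n" using pD unfolding D_def by (cases p) auto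
      have "norm (gs \<Xi> (map g [i'..<Suc k']) - \<Xi> (hd (map g [i'..<Suc k'])) (last (map g [i'..<Suc k'])))
          \<le> sc \<theta> * K * (last (map g [i'..<Suc k']) - hd (map g [i'..<Suc k'])) powr \<theta>"
        by (rule sew_bound[OF th1 K0 z d sortedP[OF p(3)] neP setP[OF p(3)]]) (use p in simp)
      then have "norm (y k' - y i' - \<Xi> (g i') (g k')) \<le> sc \<theta> * K * (g k' - g i') powr \<theta>"
        unfolding gsP[OF p(2,3)] hdP[OF less_imp_le[OF p(2)]] lastP[OF less_imp_le[OF p(2)]] .
      then show ?thesis unfolding ratio_def p(1) using Dpos[OF p(2,3)] by (simp add: pos_divide_le_eq)
    qed
    have NK: "N \<le> sc \<theta> * K" using NinD ratio_le by auto
    also have "\<dots> = (sc \<theta> * C * B powr \<beta>) * (C + N * T') powr \<beta>"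
      unfolding K_def H_def using B0 C0 N0 T'0 by (simp add: powr_mult)
    finally have NN: "N \<le> (sc \<theta> * C * B powr \<beta>) * (C + N * T') powr \<beta>" .
    have "N \<le> Nst \<theta> C B T \<alpha> \<beta>"
      unfolding Nst_def T'_def[symmetric]
      by (rule sublinear_bound[OF NN N0 C0 T'0 _ b0 b1]) (use sc_props[OF th1] C0 in simp)
    then have "N * (g k - g i) powr \<theta> \<le> Nst \<theta> C B T \<alpha> \<beta> * (g k - g i) powr \<theta>"
      by (rule mult_right_mono) simp
    then show ?thesis using bnd[OF ik] unfolding \<Xi>_def \<theta>_def by simp
  qed
qed

primrec eY :: "(real \<Rightarrow> 'v \<Rightarrow> 'w::real_normed_vector) \<Rightarrow> ('w \<Rightarrow> 'v::real_normed_vector) \<Rightarrow> 'v \<Rightarrow> (nat \<Rightarrow> real) \<Rightarrow> nat \<Rightarrow> 'w" where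
  "eY A \<iota> x0 g 0 = 0"
| "eY A \<iota> x0 g (Suc k) = eY A \<iota> x0 g k + (A (g (Suc k)) (x0 + \<iota> (eY A \<iota> x0 g k)) - A (g k) (x0 + \<iota> (eY A \<iota> x0 g k)))"

lemma euler_exists:
  fixes A :: "real \<Rightarrow> 'v::real_normed_vector \<Rightarrow> 'w::real_normed_vector" and \<iota> :: "'w \<Rightarrow> 'v"
  assumes bl: "bounded_linear \<iota>" and Bi: "\<forall>w. norm (\<iota> w) \<le> B * norm w" and B0: "B > 0"
    and C0: "C \<ge> 0" and T0: "T > 0" and a0: "0 < \<alpha>" and b0: "0 < \<beta>" and b1: "\<beta> < 1"
    and th: "\<alpha> + \<alpha> * \<beta> > 1"
    and HA1: "\<forall>u v x. 0 \<le> u \<longrightarrow> u \<le> v \<longrightarrow> v \<le> T \<longrightarrow> norm (A v x - A u x) \<le> C * (v - u) powr \<alpha>"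
    and HA2: "\<forall>u v x y. 0 \<le> u \<longrightarrow> u \<le> v \<longrightarrow> v \<le> T \<longrightarrow>
        norm ((A v x - A u x) - (A v y - A u y)) \<le> C * (v - u) powr \<alpha> * norm (x - y) powr \<beta>"
    and s0: "0 \<le> s" and sT: "s \<le> T" and fin: "finite F" and Fsub: "F \<subseteq> {s..T}"
  shows "\<exists>Xf. Xf s = xs \<and>
     (\<forall>u\<in>insert s F. \<forall>v\<in>insert s F. u < v \<longrightarrow>
        norm (Xf v - Xf u - \<iota> (A v (Xf u) - A u (Xf u))) \<le> B * Nst (\<alpha> + \<alpha> * \<beta>) C B T \<alpha> \<beta> * (v - u) powr (\<alpha> + \<alpha> * \<beta>)) \<and>
     (\<forall>t. \<exists>w. norm w \<le> C * T powr \<alpha> + Nst (\<alpha> + \<alpha> * \<beta>) C B T \<alpha> \<beta> * T powr (\<alpha> + \<alpha> * \<beta>) \<and> Xf t = xs + \<iota> w)"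
proof -
  define \<theta> where "\<theta> = \<alpha> + \<alpha> * \<beta>"
  define NN where "NN = Nst \<theta> C B T \<alpha> \<beta>"
  define L where "L = sorted_list_of_set (insert s F)"
  have finL: "finite (insert s F)" using fin by simp
  have sL: "sorted_wrt (<) L" unfolding L_def by (rule strict_sorted_list_of_set)
  have setL: "set L = insert s F" unfolding L_def using finL by (rule set_sorted_list_of_set)
  have distL: "distinct L" unfolding L_def by simp
  have Lne: "L \<noteq> []" using setL by auto
  define n where "n = length L - 1"
  have lenL: "length L = Suc n" unfolding n_def using Lne by (cases L) auto
  define g where "g = (\<lambda>k. L ! k)"
  define y where "y = eY A \<iota> xs g"
  define idx where "idx = (\<lambda>t. LEAST k. k < length L \<and> L ! k = t)"
  define Xf where "Xf = (\<lambda>t. if t \<in> set L then xs + \<iota> (y (idx t)) else xs)"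
  have idx_nth: "idx (L ! k) = k" if "k < length L" for k
    unfolding idx_def
  proof (rule Least_equality)
    show "k < length L \<and> L ! k = L ! k" using that by simp
    show "\<And>k'. k' < length L \<and> L ! k' = L ! k \<Longrightarrow> k \<le> k'"
      using distL that nth_eq_iff_index_eq by fastforce
  qed
  have Xg: "\<forall>k\<le>n. Xf (g k) = xs + \<iota> (y k)"
    unfolding Xf_def g_def using idx_nth lenL by auto
  have mono: "\<forall>i j. i < j \<longrightarrow> j \<le> n \<longrightarrow> g i < g j"
    unfolding g_def using sL lenL by (auto intro: sorted_wrt_nth_less)
  have inL: "g k \<in> insert s F" if "k \<le> n" for k unfolding g_def using that lenL setL by (metis less_Suc_eq_le nth_mem)
  have rng: "\<forall>k\<le>n. 0 \<le> g k \<and> g k \<le> T"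
  proof (intro allI impI)
    fix k assume "k \<le> n"
    then have "g k \<in> insert s F" by (rule inL)
    then have "s \<le> g k \<and> g k \<le> T" using Fsub sT by auto
    then show "0 \<le> g k \<and> g k \<le> T" using s0 by linarith
  qed
  have g0: "g 0 = s"
  proof -
    have "s \<in> set L" using setL by simp
    then have "hd L \<le> s" using sorted_bounds[OF sL Lne] by simp
    moreover have "hd L \<in> insert s F" using setL Lne hd_in_set by metis
    then have "s \<le> hd L" using Fsub by auto
    ultimately show ?thesis unfolding g_def using Lne by (simp add: hd_conv_nth)
  qed
  have rec: "\<forall>k<n. y (Suc k) = y k + (A (g (Suc k)) (Xf (g k)) - A (g k) (Xf (g k)))"
    using Xg unfolding y_def by simp
  have core: "norm (y k - y i - (A (g k) (Xf (g i)) - A (g i) (Xf (g i)))) \<le> NN * (g k - g i) powr \<theta>"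
    if "i < k" "k \<le> n" for i k
    using euler_core[OF bl Bi B0 C0 T0 a0 b0 b1 th HA1 HA2 mono rng Xg rec that] unfolding NN_def \<theta>_def .
  have NN0: "NN \<ge> 0"
  proof -
    have th1: "\<theta> > 1" using th unfolding \<theta>_def .
    have "0 \<le> sc \<theta> * C * B powr \<beta> * (2 * C) powr \<beta>" using sc_props(1)[OF th1] C0 by simp
    then show ?thesis unfolding NN_def Nst_def by (rule max.coboundedI1)
  qed
  have getidx: "\<exists>k\<le>n. u = g k" if "u \<in> insert s F" for u
  proof -
    have "u \<in> set L" using that setL by simp
    then obtain k where "k < length L" "L ! k = u" by (meson in_set_conv_nth)
    then show ?thesis unfolding g_def using lenL by (metis less_Suc_eq_le)
  qed
  have ord: "i < j" if "i \<le> n" "j \<le> n" "g i < g j" for i j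
  proof (rule ccontr)
    assume "\<not> i < j"
    then have "j = i \<or> j < i" by auto
    then show False using mono that by (metis less_asym)
  qed
  show ?thesis
  proof (intro exI[of _ Xf] conjI ballI impI allI)
    show "Xf s = xs" using Xg g0 by (metis eY.simps(1) y_def le0 add.right_neutral bounded_linear.linear[OF bl] linear_0)
  next
    fix u v assume uF: "u \<in> insert s F" and vF: "v \<in> insert s F" and uv: "u < v"
    obtain i where i: "i \<le> n" "u = g i" using getidx[OF uF] by blast
    obtain k where k: "k \<le> n" "v = g k" using getidx[OF vF] by blast
    have ik: "i < k" using ord i k uv by simp
    have e: "Xf v - Xf u - \<iota> (A v (Xf u) - A u (Xf u)) = \<iota> (y k - y i - (A (g k) (Xf (g i)) - A (g i) (Xf (g i))))"
      using Xg i k linear_diff[OF bounded_linear.linear[OF bl]] by simp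
    have "norm (Xf v - Xf u - \<iota> (A v (Xf u) - A u (Xf u))) \<le> B * norm (y k - y i - (A (g k) (Xf (g i)) - A (g i) (Xf (g i))))"
      unfolding e using Bi by simp
    also have "\<dots> \<le> B * (NN * (g k - g i) powr \<theta>)" using core[OF ik k(1)] B0 by simp
    finally show "norm (Xf v - Xf u - \<iota> (A v (Xf u) - A u (Xf u))) \<le> B * Nst (\<alpha> + \<alpha> * \<beta>) C B T \<alpha> \<beta> * (v - u) powr (\<alpha> + \<alpha> * \<beta>)"
      using i k unfolding NN_def \<theta>_def by (simp add: algebra_simps)
  next
    fix t
    define R where "R = C * T powr \<alpha> + Nst (\<alpha> + \<alpha> * \<beta>) C B T \<alpha> \<beta> * T powr (\<alpha> + \<alpha> * \<beta>)"
    have R0: "R \<ge> 0" unfolding R_def using NN0 C0 unfolding NN_def \<theta>_def by simp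
    have yb: "norm (y k) \<le> R" if "k \<le> n" for k
    proof (cases "k = 0")
      case True then show ?thesis using R0 by (simp add: y_def)
    next
      case False
      then have k0: "0 < k" by simp
      have Xs: "Xf (g 0) = xs" using Xg g0 by (metis eY.simps(1) y_def le0 add.right_neutral bounded_linear.linear[OF bl] linear_0)
      have c: "norm (y k - y 0 - (A (g k) (Xf (g 0)) - A (g 0) (Xf (g 0)))) \<le> NN * (g k - g 0) powr \<theta>"
        using core[OF k0 that] .
      have gk: "g 0 < g k" "g k \<le> T" using mono k0 that rng by auto
      have a1: "norm (A (g k) (Xf (g 0)) - A (g 0) (Xf (g 0))) \<le> C * (g k - g 0) powr \<alpha>"
        using HA1 gk rng that by auto
      have p1: "(g k - g 0) powr \<alpha> \<le> T powr \<alpha>" using gk rng a0 by (intro powr_mono2) auto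
      have p2: "(g k - g 0) powr \<theta> \<le> T powr \<theta>" using gk rng a0 b0 unfolding \<theta>_def by (intro powr_mono2) auto
      have "norm (y k) \<le> norm (A (g k) (Xf (g 0)) - A (g 0) (Xf (g 0))) + norm (y k - y 0 - (A (g k) (Xf (g 0)) - A (g 0) (Xf (g 0))))"
        using norm_triangle_sub[of "y k" "A (g k) (Xf (g 0)) - A (g 0) (Xf (g 0))"] by (simp add: y_def)
      also have "\<dots> \<le> C * T powr \<alpha> + NN * T powr \<theta>"
      proof -
        have "C * (g k - g 0) powr \<alpha> \<le> C * T powr \<alpha>" using p1 C0 by (rule mult_left_mono)
        moreover have "NN * (g k - g 0) powr \<theta> \<le> NN * T powr \<theta>" using p2 NN0 by (rule mult_left_mono)
        ultimately show ?thesis using a1 c by linarith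
      qed
      finally show ?thesis unfolding R_def NN_def \<theta>_def .
    qed
    show "\<exists>w. norm w \<le> R \<and> Xf t = xs + \<iota> w"
    proof (cases "t \<in> set L")
      case True
      then obtain k where "k < length L" "L ! k = t" by (meson in_set_conv_nth)
      then have "k \<le> n" "t = g k" using lenL unfolding g_def by auto
      then show ?thesis using Xg yb by blast
    next
      case False
      then have "Xf t = xs + \<iota> 0" unfolding Xf_def using linear_0[OF bounded_linear.linear[OF bl]] by simp
      then show ?thesis using R0 by (intro exI[of _ 0]) simp
    qed
  qed
qed

lemma hf_bounds:
  fixes A :: "real \<Rightarrow> 'v::real_normed_vector \<Rightarrow> 'w::real_normed_vector" and \<iota> :: "'w \<Rightarrow> 'v"
  assumes hf: "holder_field T \<alpha> \<beta> A" and bl: "bounded_linear \<iota>" and inj: "inj \<iota>" and T0: "T > 0" and a0: "\<alpha> > 0"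
  shows "\<exists>C\<ge>0. (\<forall>u v x. 0 \<le> u \<longrightarrow> u \<le> v \<longrightarrow> v \<le> T \<longrightarrow> norm (A v x - A u x) \<le> C * (v - u) powr \<alpha>) \<and>
     (\<forall>u v x y. 0 \<le> u \<longrightarrow> u \<le> v \<longrightarrow> v \<le> T \<longrightarrow>
        norm ((A v x - A u x) - (A v y - A u y)) \<le> C * (v - u) powr \<alpha> * norm (x - y) powr \<beta>)"
proof (cases "\<exists>x0 y0::'v. x0 \<noteq> y0")
  case False
  have w0: "w = 0" for w :: 'w
  proof -
    have "\<iota> w = \<iota> 0" using False by blast
    then show ?thesis using inj by (simp add: inj_eq)
  qed
  show ?thesis by (rule exI[of _ 0]) (simp add: w0[of "A _ _ - A _ _"] w0[of "A _ _ - A _ _ - (A _ _ - A _ _)"])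
next
  case True
  then obtain x0 y0 :: 'v where xy0: "x0 \<noteq> y0" by blast
  obtain C0 where C0: "\<forall>s\<in>{0..T}. \<forall>t\<in>{0..T}. s < t \<longrightarrow>
        (SUP x. norm (A t x - A s x)) + (SUP p\<in>{(x,y). x \<noteq> y}. norm ((A t (fst p) - A s (fst p)) - (A t (snd p) - A s (snd p))) / norm (fst p - snd p) powr \<beta>)
          \<le> C0 * (t - s) powr \<alpha>
        \<and> bdd_above (range (\<lambda>x. norm (A t x - A s x)))
        \<and> bdd_above ((\<lambda>(x,y). norm ((A t x - A s x) - (A t y - A s y)) / norm (x - y) powr \<beta>) ` {(x,y). x \<noteq> y})"
    using hf unfolding holder_field_def by blast
  define R where "R = (\<lambda>s t p. norm ((A t (fst p) - A s (fst p)) - (A t (snd p) - A s (snd p))) / norm (fst p - snd p) powr \<beta>)"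
  have Req: "(\<lambda>(x,y). norm ((A t x - A s x) - (A t y - A s y)) / norm (x - y) powr \<beta>) = R s t" for s t
    unfolding R_def by (auto simp: fun_eq_iff)
  have key: "norm (A t x - A s x) \<le> C0 * (t - s) powr \<alpha> \<and> R s t (x', y') \<le> C0 * (t - s) powr \<alpha>"
    if st: "0 \<le> s" "s < t" "t \<le> T" and xy: "x' \<noteq> y'" for s t x x' y'
  proof -
    have c: "(SUP x. norm (A t x - A s x)) + (SUP p\<in>{(x,y). x \<noteq> y}. R s t p) \<le> C0 * (t - s) powr \<alpha>"
      "bdd_above (range (\<lambda>x. norm (A t x - A s x)))" "bdd_above (R s t ` {(x,y). x \<noteq> y})"
      using C0 st unfolding Req R_def by auto
    have SN: "norm (A t z - A s z) \<le> (SUP x. norm (A t x - A s x))" for z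
      using c(2) by (rule cSUP_upper[OF UNIV_I])
    have SH: "R s t p \<le> (SUP p\<in>{(x,y). x \<noteq> y}. R s t p)" if "p \<in> {(x,y). x \<noteq> y}" for p
      using c(3) by (rule cSUP_upper[OF that])
    have R0: "R s t p \<ge> 0" for p unfolding R_def by simp
    have "0 \<le> (SUP p\<in>{(x,y). x \<noteq> y}. R s t p)" using SH[of "(x0, y0)"] R0[of "(x0,y0)"] xy0 by simp
    moreover have "0 \<le> (SUP x. norm (A t x - A s x))" using SN[of x0] norm_ge_zero order_trans by blast
    ultimately show ?thesis using c(1) SN[of x] SH[of "(x', y')"] xy by simp
  qed
  have C0pos: "C0 \<ge> 0"
  proof -
    have "norm (A T x0 - A 0 x0) \<le> C0 * (T - 0) powr \<alpha> \<and> R 0 T (x0, y0) \<le> C0 * (T - 0) powr \<alpha>"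
      by (rule key) (use T0 xy0 in auto)
    then have "norm (A T x0 - A 0 x0) \<le> C0 * (T - 0) powr \<alpha>" by (rule conjunct1)
    then have a: "norm (A T x0 - A 0 x0) \<le> C0 * T powr \<alpha>" by simp
    have "0 \<le> C0 * T powr \<alpha>" using a norm_ge_zero[of "A T x0 - A 0 x0"] by linarith
    then show ?thesis using T0 by (simp add: zero_le_mult_iff)
  qed
  show ?thesis
  proof (intro exI[of _ C0] conjI allI impI C0pos)
    fix u v x assume uv: "0 \<le> u" "u \<le> v" "v \<le> T"
    show "norm (A v x - A u x) \<le> C0 * (v - u) powr \<alpha>"
    proof (cases "u = v")
      case True then show ?thesis by simp
    next
      case False
      have "norm (A v x - A u x) \<le> C0 * (v - u) powr \<alpha> \<and> R u v (x0, y0) \<le> C0 * (v - u) powr \<alpha>"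
        by (rule key) (use uv False xy0 in auto)
      then show ?thesis by (rule conjunct1)
    qed
  next
    fix u v x y assume uv: "0 \<le> u" "u \<le> v" "v \<le> T"
    show "norm ((A v x - A u x) - (A v y - A u y)) \<le> C0 * (v - u) powr \<alpha> * norm (x - y) powr \<beta>"
    proof (cases "u = v \<or> x = y")
      case True then show ?thesis using C0pos by auto
    next
      case False
      then have uv': "u < v" "x \<noteq> y" using uv by auto
      have "norm (A v x - A u x) \<le> C0 * (v - u) powr \<alpha> \<and> R u v (x, y) \<le> C0 * (v - u) powr \<alpha>"
        by (rule key) (use uv uv' in auto)
      then have "R u v (x, y) \<le> C0 * (v - u) powr \<alpha>" by (rule conjunct2)
      moreover have "norm (x - y) powr \<beta> > 0" using uv' by simp
      ultimately show ?thesis unfolding R_def by (simp add: divide_le_eq)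
    qed
  qed
qed

lemma cluster_closed:
  assumes "closed Z" "eventually (\<lambda>g. g \<in> Z) F" "inf (nhds f) F \<noteq> bot"
  shows "f \<in> Z"
proof (rule ccontr)
  assume "f \<notin> Z"
  then have "eventually (\<lambda>g. g \<in> - Z) (nhds f)" using assms(1) by (intro eventually_nhds_in_open) auto
  note ev = this
  have "eventually (\<lambda>g. False) (inf (nhds f) F)"
    unfolding eventually_inf
    by (rule exI[of _ "\<lambda>g. g \<in> - Z"], rule exI[of _ "\<lambda>g. g \<in> Z"]) (use ev assms(2) in auto)
  then show False using assms(3) by (simp add: eventually_False)
qed

lemma delta_from_holder:
  fixes A :: "real \<Rightarrow> 'v::real_normed_vector \<Rightarrow> 'w::real_normed_vector"
  assumes C0: "C \<ge> 0" and a0: "0 < \<alpha>" and b0: "0 < \<beta>" and H0: "H \<ge> 0"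
    and HA2: "\<forall>u v x y. 0 \<le> u \<longrightarrow> u \<le> v \<longrightarrow> v \<le> T \<longrightarrow>
        norm ((A v x - A u x) - (A v y - A u y)) \<le> C * (v - u) powr \<alpha> * norm (x - y) powr \<beta>"
    and Ssub: "S \<subseteq> {0..T}"
    and hXS: "\<And>u m. u \<in> S \<Longrightarrow> m \<in> S \<Longrightarrow> u < m \<Longrightarrow> norm (Xf m - Xf u) \<le> H * (m - u) powr \<alpha>"
  shows "\<forall>u\<in>S. \<forall>m\<in>S. \<forall>v\<in>S. u < m \<longrightarrow> m < v \<longrightarrow>
     norm ((A v (Xf u) - A u (Xf u)) - (A m (Xf u) - A u (Xf u)) - (A v (Xf m) - A m (Xf m)))
       \<le> (C * H powr \<beta>) * (v - u) powr (\<alpha> + \<alpha> * \<beta>)"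
proof (intro ballI impI)
  fix u m v assume uS: "u \<in> S" and mS: "m \<in> S" and vS: "v \<in> S" and um: "u < m" and mv: "m < v"
  have e: "(A v (Xf u) - A u (Xf u)) - (A m (Xf u) - A u (Xf u)) - (A v (Xf m) - A m (Xf m))
      = (A v (Xf u) - A m (Xf u)) - (A v (Xf m) - A m (Xf m))"
    by (simp add: algebra_simps)
  have mv0: "0 \<le> m" "v \<le> T" using mS vS Ssub by auto
  have "norm ((A v (Xf u) - A m (Xf u)) - (A v (Xf m) - A m (Xf m))) \<le> C * (v - m) powr \<alpha> * norm (Xf u - Xf m) powr \<beta>"
    using HA2 mv0 mv by simp
  also have "\<dots> \<le> C * (v - u) powr \<alpha> * (H powr \<beta> * (v - u) powr (\<alpha> * \<beta>))"
  proof (rule mult_mono)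
    show "C * (v - m) powr \<alpha> \<le> C * (v - u) powr \<alpha>"
      using C0 um mv a0 by (intro mult_left_mono powr_mono2) auto
    have "norm (Xf u - Xf m) powr \<beta> \<le> (H * (m - u) powr \<alpha>) powr \<beta>"
      using hXS[OF uS mS um] b0 by (intro powr_mono2) (auto simp: norm_minus_commute)
    also have "\<dots> = H powr \<beta> * (m - u) powr (\<alpha> * \<beta>)"
      using H0 um by (simp add: powr_mult powr_powr)
    also have "\<dots> \<le> H powr \<beta> * (v - u) powr (\<alpha> * \<beta>)"
      using um mv a0 b0 by (intro mult_left_mono powr_mono2) auto
    finally show "norm (Xf u - Xf m) powr \<beta> \<le> H powr \<beta> * (v - u) powr (\<alpha> * \<beta>)" .
    show "0 \<le> C * (v - u) powr \<alpha>" using C0 by simp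
    show "0 \<le> norm (Xf u - Xf m) powr \<beta>" by simp
  qed
  also have "\<dots> = (C * H powr \<beta>) * (v - u) powr (\<alpha> + \<alpha> * \<beta>)"
    using um mv by (simp add: powr_add algebra_simps)
  finally show "norm ((A v (Xf u) - A u (Xf u)) - (A m (Xf u) - A u (Xf u)) - (A v (Xf m) - A m (Xf m)))
       \<le> (C * H powr \<beta>) * (v - u) powr (\<alpha> + \<alpha> * \<beta>)" unfolding e .
qed

lemma gs_diff: "gs (\<lambda>a b. F a b - G a b) P = gs F P - gs G P"
proof (induction P rule: induct_list012)
  case (3 a b P) then show ?case by (simp add: algebra_simps)
qed auto

lemma compact_Pi_UNIV:
  fixes K :: "'b::topological_space set"
  assumes "compact K"
  shows "compact {g :: 'a \<Rightarrow> 'b. \<forall>t. g t \<in> K}"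
proof -
  have e: "{g :: 'a \<Rightarrow> 'b. \<forall>t. g t \<in> K} = PiE UNIV (\<lambda>_. K)" by (auto simp: PiE_def extensional_def Pi_def)
  have "compactin (product_topology (\<lambda>_. euclidean) UNIV) (PiE UNIV (\<lambda>_::'a. K))"
    using assms by (simp add: compactin_PiE)
  then show ?thesis unfolding e euclidean_product_topology by simp
qed

theorem mainTheorem1:
  fixes T \<alpha> \<beta> :: real
    and \<iota> :: "'w::banach \<Rightarrow> 'v::banach"
    and A :: "real \<Rightarrow> 'v \<Rightarrow> 'w"
    and s :: real and xs :: 'v
  assumes "T > 0"
    and "0 < \<alpha>" "\<alpha> < 1" "0 < \<beta>" "\<beta> < 1" "\<alpha> * (1 + \<beta>) > 1"
    and "separable_type TYPE('v)" "separable_type TYPE('w)"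
    and "compact_embedding \<iota>"
    and "holder_field T \<alpha> \<beta> A"
    and "0 \<le> s" "s < T"
  shows "\<exists>(x::real \<Rightarrow> 'v) \<gamma>. 0 < \<gamma> \<and> \<gamma> \<le> 1 \<and> \<alpha> + \<beta> * \<gamma> > 1 \<and> holder_path \<gamma> s T x \<and>
           (\<forall>t\<in>{s..T}. \<exists>I. has_young_integral A x s t I \<and> x t = xs + \<iota> I)"
proof -
  note T0 = assms(1) and a0 = assms(2) and a1 = assms(3) and b0 = assms(4) and b1 = assms(5)
  note s0 = assms(11) and sT = assms(12)
  have bl: "bounded_linear \<iota>" and inj: "inj \<iota>" and cpt: "compact (closure (\<iota> ` ball 0 1))"
    using assms(9) unfolding compact_embedding_def by auto
  have lin: "linear \<iota>" using bl by (rule bounded_linear.linear)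
  obtain B where B0: "B > 0" and Bi': "\<forall>w. norm (\<iota> w) \<le> norm w * B"
    using bounded_linear.pos_bounded[OF bl] by blast
  have Bi: "\<forall>w. norm (\<iota> w) \<le> B * norm w" using Bi' by (simp add: mult.commute)
  obtain C where C0: "C \<ge> 0"
    and HA1: "\<forall>u v x. 0 \<le> u \<longrightarrow> u \<le> v \<longrightarrow> v \<le> T \<longrightarrow> norm (A v x - A u x) \<le> C * (v - u) powr \<alpha>"
    and HA2: "\<forall>u v x y. 0 \<le> u \<longrightarrow> u \<le> v \<longrightarrow> v \<le> T \<longrightarrow>
        norm ((A v x - A u x) - (A v y - A u y)) \<le> C * (v - u) powr \<alpha> * norm (x - y) powr \<beta>"
    using hf_bounds[OF assms(10) bl inj T0 a0] by blast
  define \<theta> where "\<theta> = \<alpha> + \<alpha> * \<beta>"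
  have th: "\<alpha> + \<alpha> * \<beta> > 1" using assms(6) by (simp add: algebra_simps)
  have th1: "\<theta> > 1" using th unfolding \<theta>_def .
  have thpos: "\<theta> - \<alpha> > 0" unfolding \<theta>_def using a0 b0 by simp
  define NN where "NN = Nst \<theta> C B T \<alpha> \<beta>"
  have NN0: "NN \<ge> 0"
  proof -
    have "0 \<le> sc \<theta> * C * B powr \<beta> * (2 * C) powr \<beta>" using sc_props(1)[OF th1] C0 by simp
    then show ?thesis unfolding NN_def Nst_def by (rule max.coboundedI1)
  qed
  define M where "M = B * NN"
  have M0: "M \<ge> 0" unfolding M_def using B0 NN0 by simp
  define R where "R = C * T powr \<alpha> + NN * T powr \<theta>"
  have R0: "R \<ge> 0" unfolding R_def using C0 NN0 by simp
  define Pr where "Pr = (\<lambda>F Xf. Xf s = xs \<and>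
     (\<forall>u\<in>insert s F. \<forall>v\<in>insert s F. u < v \<longrightarrow>
        norm (Xf v - Xf u - \<iota> (A v (Xf u) - A u (Xf u))) \<le> M * (v - u) powr \<theta>) \<and>
     (\<forall>t. \<exists>w. norm w \<le> R \<and> Xf t = xs + \<iota> w))"
  have exP: "\<exists>Xf. Pr F Xf" if "finite F" "F \<subseteq> {s..T}" for F
    using euler_exists[OF bl Bi B0 C0 T0 a0 b0 b1 th HA1 HA2 s0 _ that, of xs] sT
    unfolding Pr_def M_def NN_def R_def \<theta>_def by simp
  define Xsel where "Xsel = (\<lambda>F. SOME Xf. Pr F Xf)"
  have XselP: "Pr F (Xsel F)" if "finite F" "F \<subseteq> {s..T}" for F
    unfolding Xsel_def using exP[OF that] by (rule someI_ex)
  define Kc where "Kc = (\<lambda>v. xs + (R + 1) *\<^sub>R v) ` closure (\<iota> ` ball 0 1)"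
  have Kc_cpt: "compact Kc" unfolding Kc_def
    by (rule compact_continuous_image[OF _ cpt]) (intro continuous_intros)
  have inKc: "xs + \<iota> w \<in> Kc" if "norm w \<le> R" for w
  proof -
    have R1: "R + 1 > 0" using R0 by simp
    have "w /\<^sub>R (R + 1) \<in> ball 0 1" using that R1 by (simp add: divide_simps)
    then have "\<iota> (w /\<^sub>R (R + 1)) \<in> closure (\<iota> ` ball 0 1)" by (meson closure_subset image_eqI subsetD)
    moreover have "xs + \<iota> w = xs + (R + 1) *\<^sub>R \<iota> (w /\<^sub>R (R + 1))"
      using R1 linear_scale[OF lin] by simp
    ultimately show ?thesis unfolding Kc_def by blast
  qed
  define Pi where "Pi = {g :: real \<Rightarrow> 'v. \<forall>t. g t \<in> Kc}"
  have Pi_cpt: "compact Pi" unfolding Pi_def by (rule compact_Pi_UNIV[OF Kc_cpt])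
  define Fl where "Fl = filtermap Xsel (finite_subsets_at_top {s..T})"
  have Fl_nb: "Fl \<noteq> bot" unfolding Fl_def by (simp add: filtermap_bot_iff)
  have evPi: "eventually (\<lambda>g. g \<in> Pi) Fl"
    unfolding Fl_def eventually_filtermap
  proof (rule eventually_finite_subsets_at_top_weakI)
    fix F assume "finite F" "F \<subseteq> {s..T}"
    then have "\<forall>t. \<exists>w. norm w \<le> R \<and> Xsel F t = xs + \<iota> w" using XselP unfolding Pr_def by blast
    note ex = this
    show "Xsel F \<in> Pi" unfolding Pi_def
    proof (intro CollectI allI)
      fix t
      obtain w where "norm w \<le> R" "Xsel F t = xs + \<iota> w" using ex by blast
      then show "Xsel F t \<in> Kc" using inKc by simp
    qed
  qed
  obtain f where fPi: "f \<in> Pi" and fcl: "inf (nhds f) Fl \<noteq> bot"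
    using Pi_cpt[unfolded compact_filter] Fl_nb evPi by blast
  have fs: "f s = xs"
  proof -
    have "f \<in> {g. g s = xs}"
    proof (rule cluster_closed[OF _ _ fcl])
      show "closed {g :: real \<Rightarrow> 'v. g s = xs}" by (rule closed_Collect_eq) simp_all
      show "eventually (\<lambda>g. g \<in> {g. g s = xs}) Fl"
        unfolding Fl_def eventually_filtermap
        by (rule eventually_finite_subsets_at_top_weakI) (use XselP in \<open>auto simp: Pr_def\<close>)
    qed
    then show ?thesis by simp
  qed
  have fP: "norm (f v - f u - \<iota> (A v (f u) - A u (f u))) \<le> M * (v - u) powr \<theta>"
    if uv: "s \<le> u" "u < v" "v \<le> T" for u v
  proof -
    define Z where "Z = {g :: real \<Rightarrow> 'v. norm (g v - g u - \<iota> (A v (g u) - A u (g u))) \<le> M * (v - u) powr \<theta>}"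
    have cPhi: "continuous_on UNIV (\<lambda>x. A v x - A u x)"
    proof (rule holder_cont[OF _ b0])
      show "0 \<le> C * (v - u) powr \<alpha>" using C0 by simp
      fix x y show "norm ((A v x - A u x) - (A v y - A u y)) \<le> C * (v - u) powr \<alpha> * norm (x - y) powr \<beta>"
        using HA2 uv s0 by simp
    qed
    have c1: "continuous_on UNIV (\<lambda>g :: real \<Rightarrow> 'v. g u)" by simp
    have c1': "continuous_on UNIV (\<lambda>g :: real \<Rightarrow> 'v. g v)" by simp
    have c2: "continuous_on UNIV (\<lambda>g :: real \<Rightarrow> 'v. A v (g u) - A u (g u))"
      using continuous_on_compose2[OF cPhi c1] by simp
    have c3: "continuous_on UNIV (\<lambda>g :: real \<Rightarrow> 'v. \<iota> (A v (g u) - A u (g u)))"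
      using continuous_on_compose2[OF linear_continuous_on[OF bl, of UNIV] c2] by simp
    have cZ: "closed Z" unfolding Z_def
      by (rule closed_Collect_le) (intro continuous_on_norm continuous_on_diff c1 c1' c3 continuous_on_const)+
    have evZ: "eventually (\<lambda>g. g \<in> Z) Fl"
      unfolding Fl_def eventually_filtermap eventually_finite_subsets_at_top
    proof (intro exI[of _ "{u, v}"] conjI allI impI)
      show "finite {u, v}" by simp
      show "{u, v} \<subseteq> {s..T}" using uv by auto
      fix Y assume Y: "finite Y \<and> {u, v} \<subseteq> Y \<and> Y \<subseteq> {s..T}"
      then have "Pr Y (Xsel Y)" using XselP by blast
      then show "Xsel Y \<in> Z" unfolding Pr_def Z_def using Y uv by blast
    qed
    show ?thesis using cluster_closed[OF cZ evZ fcl] unfolding Z_def by simp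
  qed
  define H where "H = B * C + M * T powr (\<theta> - \<alpha>)"
  have H0: "H \<ge> 0" unfolding H_def using B0 C0 M0 by simp
  have fH: "norm (f v - f u) \<le> H * (v - u) powr \<alpha>" if uv: "s \<le> u" "u \<le> v" "v \<le> T" for u v
  proof (cases "u = v")
    case True then show ?thesis by simp
  next
    case False
    then have uv': "u < v" using uv by simp
    have "norm (f v - f u) \<le> norm (\<iota> (A v (f u) - A u (f u))) + norm (f v - f u - \<iota> (A v (f u) - A u (f u)))"
      by (rule norm_triangle_sub)
    also have "\<dots> \<le> B * (C * (v - u) powr \<alpha>) + M * (v - u) powr \<theta>"
    proof -
      have "norm (\<iota> (A v (f u) - A u (f u))) \<le> B * norm (A v (f u) - A u (f u))" using Bi by simp
      also have "\<dots> \<le> B * (C * (v - u) powr \<alpha>)" using HA1 uv s0 B0 by (intro mult_left_mono) auto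
      finally show ?thesis using fP[OF uv(1) uv' uv(3)] by linarith
    qed
    also have "\<dots> \<le> H * (v - u) powr \<alpha>"
    proof -
      have "(v - u) powr \<theta> = (v - u) powr \<alpha> * (v - u) powr (\<theta> - \<alpha>)" using uv' by (simp add: powr_add[symmetric])
      also have "\<dots> \<le> (v - u) powr \<alpha> * T powr (\<theta> - \<alpha>)"
        using uv uv' s0 thpos by (intro mult_left_mono powr_mono2) auto
      finally have "M * (v - u) powr \<theta> \<le> M * ((v - u) powr \<alpha> * T powr (\<theta> - \<alpha>))" using M0 by (rule mult_left_mono)
      then show ?thesis unfolding H_def by (simp add: algebra_simps)
    qed
    finally show ?thesis .
  qed
  have hp: "holder_path \<alpha> s T f"
    unfolding holder_path_def
  proof (intro exI[of _ "norm xs + H * T powr \<alpha> + H"] ballI conjI)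
    fix u v assume u: "u \<in> {s..T}" and v: "v \<in> {s..T}"
    have "norm (f u) \<le> norm (f s) + norm (f u - f s)" by (rule norm_triangle_sub)
    also have "norm (f u - f s) \<le> H * (u - s) powr \<alpha>" using fH u by simp
    also have "H * (u - s) powr \<alpha> \<le> H * T powr \<alpha>" using u s0 a0 H0 by (intro mult_left_mono powr_mono2) auto
    finally show "norm (f u) \<le> norm xs + H * T powr \<alpha> + H" using fs H0 by simp
    have "norm (f v - f u) \<le> H * \<bar>v - u\<bar> powr \<alpha>"
    proof (cases "u \<le> v")
      case True then show ?thesis using fH u v by simp
    next
      case False
      then have "norm (f u - f v) \<le> H * (u - v) powr \<alpha>" using fH u v by simp
      then show ?thesis using False by (simp add: norm_minus_commute)
    qed
    also have "\<dots> \<le> (norm xs + H * T powr \<alpha> + H) * \<bar>v - u\<bar> powr \<alpha>"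
      using H0 by (intro mult_right_mono) auto
    finally show "norm (f v - f u) \<le> (norm xs + H * T powr \<alpha> + H) * \<bar>v - u\<bar> powr \<alpha>" .
  qed
  have integ: "\<exists>I. has_young_integral A f s t I \<and> f t = xs + \<iota> I" if t: "t \<in> {s..T}" for t
  proof (cases "t = s")
    case True
    have "has_young_integral A f s s 0"
      unfolding has_young_integral_def
    proof (intro allI impI exI[of _ 1] conjI)
      fix P :: "real list" and \<epsilon> :: real assume "\<epsilon> > 0" and P: "is_partition P s s \<and> mesh P < 1"
      then have "P = [s]" using sorted_hd_eq_last[of P] unfolding is_partition_def by auto
      then show "norm (young_sum A f P - 0) < \<epsilon>" using \<open>\<epsilon> > 0\<close> by (simp add: young_sum_gs)
    qed simp
    moreover have "f s = xs + \<iota> 0" using fs linear_0[OF lin] by simp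
    ultimately show ?thesis using True by blast
  next
    case False
    then have st: "s < t" "t \<le> T" using t by auto
    define \<Xi> where "\<Xi> = (\<lambda>a b. A b (f a) - A a (f a))"
    define K where "K = C * H powr \<beta>"
    have K0: "K \<ge> 0" unfolding K_def using C0 by simp
    have z: "\<forall>u\<in>{s..t}. \<Xi> u u = 0" unfolding \<Xi>_def by simp
    have d: "\<forall>u\<in>{s..t}. \<forall>m\<in>{s..t}. \<forall>v\<in>{s..t}. u < m \<longrightarrow> m < v \<longrightarrow> norm (\<Xi> u v - \<Xi> u m - \<Xi> m v) \<le> K * (v - u) powr \<theta>"
      unfolding \<Xi>_def K_def \<theta>_def
    proof (rule delta_from_holder[OF C0 a0 b0 H0 HA2])
      show "{s..t} \<subseteq> {0..T}" using s0 st by auto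
      fix u m assume "u \<in> {s..t}" "m \<in> {s..t}" "u < m"
      then show "norm (f m - f u) \<le> H * (m - u) powr \<alpha>" using fH st by simp
    qed
    obtain I where I: "\<forall>\<epsilon>>0. \<exists>\<delta>>0. \<forall>P. is_partition P s t \<and> mesh P < \<delta> \<longrightarrow> norm (gs \<Xi> P - I) < \<epsilon>"
      using sewing_exists[OF th1 K0 z d st(1)] by blast
    have hyi: "has_young_integral A f s t I"
      unfolding has_young_integral_def young_sum_gs using I unfolding \<Xi>_def .
    have L1: "(\<lambda>n. \<iota> (gs \<Xi> (unif s t n))) \<longlonglongrightarrow> \<iota> I"
      using bounded_linear.tendsto[OF bl conv_unif[OF I st(1)]] .
    have bndP: "norm (\<iota> (gs \<Xi> P) - (f t - f s)) \<le> M * (mesh P powr (\<theta> - 1) * (t - s))"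
      if P: "is_partition P s t" for P
    proof -
      have sP: "sorted_wrt (<) P" "P \<noteq> []" "hd P = s" "last P = t" using P unfolding is_partition_def by auto
      have setP: "set P \<subseteq> {s..t}" using partition_set[OF P] .
      have e1: "\<iota> (gs \<Xi> P) = gs (\<lambda>a b. \<iota> (\<Xi> a b)) P" by (rule gs_linear[OF bl])
      have e2: "f t - f s = gs (\<lambda>a b. f b - f a) P" using gs_telescope[OF sP(2), of f] sP by simp
      have "\<iota> (gs \<Xi> P) - (f t - f s) = gs (\<lambda>a b. \<iota> (\<Xi> a b) - (f b - f a)) P"
        unfolding e1 e2 gs_diff ..
      then have "norm (\<iota> (gs \<Xi> P) - (f t - f s)) \<le> gs (\<lambda>a b. norm (\<iota> (\<Xi> a b) - (f b - f a))) P"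
        using gs_norm_le by metis
      also have "\<dots> \<le> gs (\<lambda>a b. M * (b - a) powr \<theta>) P"
      proof (rule gs_mono)
        fix a b assume ab: "(a, b) \<in> set (zip P (tl P))"
        have "a < b" using zip_tl_sorted[OF sP(1) ab] .
        moreover have "a \<in> {s..t}" "b \<in> {s..t}" using zip_tl_in[OF ab] setP by auto
        ultimately have "norm (f b - f a - \<iota> (A b (f a) - A a (f a))) \<le> M * (b - a) powr \<theta>"
          using fP st by simp
        then show "norm (\<iota> (\<Xi> a b) - (f b - f a)) \<le> M * (b - a) powr \<theta>"
          unfolding \<Xi>_def by (simp add: norm_minus_commute)
      qed
      also have "\<dots> = M * gs (\<lambda>a b. (b - a) powr \<theta>) P" by (rule gs_scale)
      also have "\<dots> \<le> M * (mesh P powr (\<theta> - 1) * (t - s))"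
        using mesh_sum_bound[OF th1 sP(1,2)] sP M0 by (intro mult_left_mono) auto
      finally show ?thesis .
    qed
    have mlim: "(\<lambda>n. M * (mesh (unif s t n) powr (\<theta> - 1) * (t - s))) \<longlonglongrightarrow> 0"
    proof -
      have "(\<lambda>n. mesh (unif s t n) powr (\<theta> - 1)) \<longlonglongrightarrow> 0"
        by (rule tendsto_zero_powrI[OF unif_mesh_lim[OF st(1)] tendsto_const]) (use th1 mesh_nonneg in auto)
      then have "(\<lambda>n. mesh (unif s t n) powr (\<theta> - 1) * (t - s)) \<longlonglongrightarrow> 0"
        using tendsto_mult_left_zero by blast
      then show ?thesis using tendsto_mult_right_zero by blast
    qed
    have L2: "(\<lambda>n. \<iota> (gs \<Xi> (unif s t n))) \<longlonglongrightarrow> f t - f s"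
      unfolding Lim_null[of _ "f t - f s"]
      by (rule Lim_null_comparison[OF _ mlim]) (use bndP unif_partition[OF st(1)] in simp)
    have "\<iota> I = f t - f s" using LIMSEQ_unique[OF L1 L2] .
    then have "f t = xs + \<iota> I" using fs by simp
    then show ?thesis using hyi by blast
  qed
  show ?thesis
  proof (intro exI[of _ f] exI[of _ \<alpha>] conjI a0 hp ballI integ)
    show "\<alpha> \<le> 1" using a1 by simp
    show "\<alpha> + \<beta> * \<alpha> > 1" using th by (simp add: mult.commute)
  qed
qed


end
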